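(* Let $n\ge1$ and $1<p<\infty$. Then $SR_{p,p}(\mathbb{R}^n)=L^p(\mathbb{R}^n)$.
   Context: $\mathcal{D}(\mathbb{R}^n)=\{2^{-k}(m+[0,1)^n):k\in\mathbb{Z},m\in\mathbb{Z}^n\}$. A countable $(Q_i)_{i\in I}\subset\mathcal{D}(\mathbb{R}^n)$ is sparse if there exist pairwise disjoint measurable $E_{Q_i}\subseteq Q_i$ with $|E_{Q_i}|\ge\frac12|Q_i|$; $S(\mathbb{R}^n)$ is the set of sparse families. $SR_{p,p}(\mathbb{R}^n)$ is the set of $f\in L^1_{\mathrm{loc}}(\mathbb{R}^n)$ with $\|f\|_{SR_{p,p}}=\sup_{(Q_i)\in S(\mathbb{R}^n)}\big\{\sum_i\big(|Q_i|^{-1/p'}\int_{Q_i}|f|\big)^p\big\}^{1/p}<\infty$, $p'$ the dual exponent. *)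

theory Defs
  imports "HOL-Analysis.Analysis"
begin

definition dyadic_cube :: "int \<Rightarrow> ('n::finite \<Rightarrow> int) \<Rightarrow> (real^'n) set" where
  "dyadic_cube k m = {x. \<forall>i. 2 powr (- real_of_int k) * real_of_int (m i) \<le> x $ i
                          \<and> x $ i < 2 powr (- real_of_int k) * (real_of_int (m i) + 1)}"

definition dyadic_cubes :: "(real^'n::finite) set set" where
  "dyadic_cubes = {dyadic_cube k m | k m. True}"

text \<open>A countable family (Q i)_{i in I} of dyadic cubes (countable index sets are
  represented as subsets of nat) is sparse.\<close>
definition sparse :: "(nat \<Rightarrow> (real^'n::finite) set) \<Rightarrow> nat set \<Rightarrow> bool" where
  "sparse Q I \<longleftrightarrow> (\<forall>i\<in>I. Q i \<in> dyadic_cubes) \<and>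
     (\<exists>E. disjoint_family_on E I \<and>
        (\<forall>i\<in>I. E i \<in> sets lebesgue \<and> E i \<subseteq> Q i \<and>
                 measure lebesgue (E i) \<ge> 1/2 * measure lebesgue (Q i)))"

definition loc_integrable :: "(real^'n::finite \<Rightarrow> real) \<Rightarrow> bool" where
  "loc_integrable f \<longleftrightarrow> (\<forall>K. compact K \<longrightarrow> set_integrable lebesgue K f)"

definition dual_exp :: "real \<Rightarrow> real" where
  "dual_exp p = p / (p - 1)"

definition sr_sum :: "real \<Rightarrow> (real^'n::finite \<Rightarrow> real) \<Rightarrow> (nat \<Rightarrow> (real^'n) set) \<Rightarrow> nat set \<Rightarrow> ennreal" where
  "sr_sum p f Q I = (\<Sum>i. if i \<in> I then
       ennreal ((measure lebesgue (Q i) powr (- 1 / dual_exp p)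
                 * (LINT x:Q i|lebesgue. \<bar>f x\<bar>)) powr p) else 0)"

text \<open>The SR_{p,p} norm raised to the p-th power (finite iff the norm is finite).\<close>
definition sr_norm_p :: "real \<Rightarrow> (real^'n::finite \<Rightarrow> real) \<Rightarrow> ennreal" where
  "sr_norm_p p f = (SUP (Q, I) \<in> {(Q, I). sparse Q I}. sr_sum p f Q I)"

definition SR_pp :: "real \<Rightarrow> (real^'n::finite \<Rightarrow> real) set" where
  "SR_pp p = {f. loc_integrable f \<and> sr_norm_p p f < \<infinity>}"

definition Lp :: "real \<Rightarrow> (real^'n::finite \<Rightarrow> real) set" where
  "Lp p = {f. f \<in> borel_measurable lebesgue \<and> integrable lebesgue (\<lambda>x. \<bar>f x\<bar> powr p)}"

end

theory Submission
  imports Defs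
begin


definition idx :: "int \<Rightarrow> real^'n::finite \<Rightarrow> ('n \<Rightarrow> int)" where
  "idx k x = (\<lambda>i. \<lfloor>2 powr k * x$i\<rfloor>)"

lemma two_powr_inv: "2 powr (- real_of_int k) = 1 / 2 powr (real_of_int k)"
  by (simp add: powr_minus_divide)

lemma mem_cube_iff: "x \<in> dyadic_cube k m \<longleftrightarrow> idx k x = m"
proof -
  have c: "(0::real) < 2 powr real_of_int k" by simp
  have "\<And>i. (2 powr (- real_of_int k) * real_of_int (m i) \<le> x $ i
            \<and> x $ i < 2 powr (- real_of_int k) * (real_of_int (m i) + 1)) \<longleftrightarrow>
            \<lfloor>2 powr k * x$i\<rfloor> = m i"
    using c by (simp add: two_powr_inv floor_eq_iff field_simps)
  then show ?thesis unfolding dyadic_cube_def idx_def by (auto simp: fun_eq_iff)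
qed

lemma cube_eq: "dyadic_cube k m = {x. idx k x = m}"
  using mem_cube_iff by blast

definition lo :: "int \<Rightarrow> ('n::finite \<Rightarrow> int) \<Rightarrow> real^'n" where
  "lo k m = (\<chi> i. 2 powr (- real_of_int k) * real_of_int (m i))"
definition hi :: "int \<Rightarrow> ('n::finite \<Rightarrow> int) \<Rightarrow> real^'n" where
  "hi k m = (\<chi> i. 2 powr (- real_of_int k) * (real_of_int (m i) + 1))"

lemma box_sub_cube: "box (lo k m) (hi k m) \<subseteq> dyadic_cube k m"
  by (auto simp: mem_box_cart lo_def hi_def dyadic_cube_def less_imp_le)

lemma cube_sub_cbox: "dyadic_cube k m \<subseteq> cbox (lo k m) (hi k m)"
  by (auto simp: mem_box_cart lo_def hi_def dyadic_cube_def less_imp_le)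

lemma cube_borel: "dyadic_cube k (m::'n::finite \<Rightarrow> int) \<in> sets borel"
proof -
  have "dyadic_cube k m = (\<Inter>i. {x::real^'n. 2 powr (- real_of_int k) * real_of_int (m i) \<le> x $ i}
       \<inter> {x. x $ i < 2 powr (- real_of_int k) * (real_of_int (m i) + 1)})"
    by (auto simp: dyadic_cube_def)
  also have "\<dots> \<in> sets borel"
    by (intro sets.countable_INT' borel_closed borel_open sets.Int)
       (auto intro!: closed_Collect_le open_Collect_less continuous_intros)
  finally show ?thesis .
qed

lemma cube_lebesgue: "dyadic_cube k (m::'n::finite \<Rightarrow> int) \<in> sets lebesgue"
  by (rule sets_completionI_sets) (simp add: cube_borel)

lemma cube_bounded: "bounded (dyadic_cube k m)"
  using cube_sub_cbox bounded_cbox bounded_subset by blast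

lemma cube_lmeasurable: "dyadic_cube k m \<in> lmeasurable"
  by (rule fmeasurableI2[OF lmeasurable_cbox cube_sub_cbox cube_lebesgue])

lemma cube_measure: "measure lebesgue (dyadic_cube k (m::'n::finite \<Rightarrow> int)) = (2 powr (- real_of_int k)) ^ CARD('n)"
proof -
  let ?a = "lo k m :: real^'n" and ?b = "hi k m :: real^'n"
  have le: "\<And>i. ?a $ i \<le> ?b $ i" by (simp add: lo_def hi_def)
  have "measure lebesgue (dyadic_cube k m) = measure lebesgue (cbox ?a ?b)"
  proof (rule measure_negligible_symdiff)
    show "cbox ?a ?b \<in> lmeasurable" by simp
    show "negligible (sym_diff (cbox ?a ?b) (dyadic_cube k m))"
      by (rule negligible_subset[OF negligible_frontier_interval[of ?a ?b]])
         (use box_sub_cube[of k m] cube_sub_cbox[of k m] in blast)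
  qed
  also have "\<dots> = (\<Prod>i\<in>UNIV. ?b $ i - ?a $ i)"
  proof -
    have "?a \<in> cbox ?a ?b" using le by (simp add: mem_box_cart)
    then have "cbox ?a ?b \<noteq> {}" by blast
    then show ?thesis by (simp add: content_cbox_cart)
  qed
  also have "\<dots> = (\<Prod>i\<in>(UNIV::'n set). 2 powr (- real_of_int k))"
    by (simp add: lo_def hi_def algebra_simps)
  finally show ?thesis by simp
qed

lemma cube_measure_pos: "measure lebesgue (dyadic_cube k m) > 0"
  by (simp add: cube_measure)

lemma cube_disjoint: "m \<noteq> m' \<Longrightarrow> dyadic_cube k m \<inter> dyadic_cube k m' = {}"
  by (auto simp: cube_eq)

lemma idx_mono:
  assumes "k \<le> k'"
  shows "idx k x = (\<lambda>i. idx k' x i div 2 ^ nat (k' - k))"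
proof
  fix i
  have e: "real_of_int (2 ^ nat (k' - k)) = 2 powr (real_of_int k' - real_of_int k)"
    using assms powr_realpow[of 2 "nat (k' - k)"] by simp
  have "2 powr real_of_int k * x $ i = (2 powr real_of_int k' * x $ i) / real_of_int (2 ^ nat (k' - k))"
    by (simp only: e powr_diff) simp
  moreover have "\<lfloor>(2 powr k' * x$i) / real_of_int (2 ^ nat (k' - k))\<rfloor> = \<lfloor>2 powr k' * x$i\<rfloor> div 2 ^ nat (k'-k)"
    by (rule floor_divide_real_eq_div) simp
  ultimately show "idx k x i = idx k' x i div 2 ^ nat (k' - k)"
    unfolding idx_def by simp
qed

lemma cube_nested_or_disjoint:
  assumes "k \<le> k'"
  shows "dyadic_cube k' m' \<subseteq> dyadic_cube k m \<or> dyadic_cube k' m' \<inter> dyadic_cube k m = {}"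
proof (cases "dyadic_cube k' m' \<inter> dyadic_cube k m = {}")
  case False
  then obtain x where x: "idx k' x = m'" "idx k x = m" by (auto simp: cube_eq)
  have "dyadic_cube k' m' \<subseteq> dyadic_cube k m"
  proof
    fix y assume "y \<in> dyadic_cube k' m'"
    then have "idx k' y = m'" by (simp add: cube_eq)
    then have "idx k y = idx k x" using x idx_mono[OF assms, of y] idx_mono[OF assms, of x] by simp
    then show "y \<in> dyadic_cube k m" using x by (simp add: cube_eq)
  qed
  then show ?thesis by simp
qed simp

lemma dyadic_nested_or_disjoint:
  assumes "Q \<in> dyadic_cubes" "Q' \<in> dyadic_cubes"
  shows "Q \<subseteq> Q' \<or> Q' \<subseteq> Q \<or> Q \<inter> Q' = {}"
proof -
  obtain k m k' m' where q: "Q = dyadic_cube k m" "Q' = dyadic_cube k' m'"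
    using assms unfolding dyadic_cubes_def by auto
  show ?thesis
  proof (cases "k \<le> k'")
    case True then show ?thesis using cube_nested_or_disjoint[OF True, of m' m] q by auto
  next
    case False then have "k' \<le> k" by simp
    then show ?thesis using cube_nested_or_disjoint[of k' k m m'] q by auto
  qed
qed



definition pr :: "real set \<Rightarrow> real \<Rightarrow> real" where
  "pr V v = Max (insert 0 {w\<in>V. w < v})"

lemma pr_props:
  assumes "finite V" "\<forall>v\<in>V. 0 < v" "0 < m"
  shows "pr V m \<in> insert 0 V" "pr V m < m" "0 \<le> pr V m"
    "\<And>v. v \<in> V \<Longrightarrow> v < m \<Longrightarrow> v \<le> pr V m"
proof -
  have fin: "finite (insert 0 {w\<in>V. w < m})" using assms(1) by simp
  have "pr V m \<in> insert 0 {w\<in>V. w < m}" unfolding pr_def by (rule Max_in[OF fin]) simp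
  then show "pr V m \<in> insert 0 V" "pr V m < m" using assms(3) by auto
  show "0 \<le> pr V m" unfolding pr_def using fin by (simp add: Max_ge_iff)
  show "\<And>v. v \<in> V \<Longrightarrow> v < m \<Longrightarrow> v \<le> pr V m" unfolding pr_def using fin by (auto intro: Max_ge)
qed

lemma telescope:
  fixes V :: "real set" and h :: "real \<Rightarrow> real"
  assumes fin: "finite V" and pos: "\<forall>v\<in>V. 0 < v" and h0: "h 0 = 0"
  shows "m \<in> insert 0 V \<Longrightarrow> (\<Sum>v\<in>{v\<in>V. v \<le> m}. h v - h (pr V v)) = h m"
proof (induction "card {v\<in>V. v \<le> m}" arbitrary: m rule: less_induct)
  case less
  show ?case
  proof (cases "m = 0")
    case True
    then have "{v\<in>V. v \<le> m} = {}" using pos by force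
    then show ?thesis using True h0 by (simp only: sum.empty)
  next
    case False
    then have mV: "m \<in> V" and mpos: "0 < m" using less.prems pos by auto
    let ?m' = "pr V m"
    note P = pr_props[OF fin pos mpos]
    have eq: "{v\<in>V. v \<le> m} = insert m {v\<in>V. v \<le> ?m'}"
      using P mV by (auto simp: less_le)
    have nm: "m \<notin> {v\<in>V. v \<le> ?m'}" using P by auto
    have f2: "finite {v\<in>V. v \<le> ?m'}" using fin by simp
    have "card {v\<in>V. v \<le> ?m'} < card {v\<in>V. v \<le> m}"
      unfolding eq using nm f2 by simp
    then have IH: "(\<Sum>v\<in>{v\<in>V. v \<le> ?m'}. h v - h (pr V v)) = h ?m'"
      using less.hyps P(1) by blast
    show ?thesis unfolding eq using nm f2 IH by simp
  qed
qed



lemma dc_lmeas: "Q \<in> dyadic_cubes \<Longrightarrow> Q \<in> lmeasurable"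
  unfolding dyadic_cubes_def using cube_lmeasurable by auto

lemma dc_measure_pos: "Q \<in> dyadic_cubes \<Longrightarrow> 0 < measure lebesgue Q"
  unfolding dyadic_cubes_def using cube_measure_pos by auto

lemma union_nonneg:
  fixes G :: "real^'n::finite \<Rightarrow> real"
  shows "finite S \<Longrightarrow> S \<subseteq> dyadic_cubes \<Longrightarrow> (\<And>Q. Q \<in> S \<Longrightarrow> set_integrable lebesgue Q G)
    \<Longrightarrow> (\<And>Q. Q \<in> S \<Longrightarrow> 0 \<le> (LINT x:Q|lebesgue. G x))
    \<Longrightarrow> 0 \<le> (LINT x:\<Union>S|lebesgue. G x)"
proof (induction "card S" arbitrary: S rule: less_induct)
  case less
  show ?case
  proof (cases "S = {}")
    case True then show ?thesis by (simp add: set_lebesgue_integral_def)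
  next
    case False
    obtain Q where Q: "Q \<in> S" and maxQ: "\<And>Q'. Q' \<in> S \<Longrightarrow> Q \<subseteq> Q' \<Longrightarrow> Q' = Q"
      using finite_has_maximal[OF less.prems(1) False] by blast
    define S' where "S' = {Q'\<in>S. \<not> Q' \<subseteq> Q}"
    have S'S: "S' \<subseteq> S" unfolding S'_def by auto
    have QS': "Q \<notin> S'" unfolding S'_def by auto
    have fin': "finite S'" using S'S less.prems(1) finite_subset by blast
    have card: "card S' < card S" using S'S QS' Q less.prems(1) by (metis psubset_card_mono psubsetI)
    have un: "\<Union>S = Q \<union> \<Union>S'" unfolding S'_def using Q by blast
    have disj: "Q \<inter> \<Union>S' = {}"
    proof -
      have "Q \<inter> Q' = {}" if "Q' \<in> S'" for Q'
      proof -
        have "Q' \<in> S" "\<not> Q' \<subseteq> Q" using that unfolding S'_def by auto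
        moreover have "Q \<in> dyadic_cubes" "Q' \<in> dyadic_cubes" using Q \<open>Q' \<in> S\<close> less.prems(2) by auto
        ultimately show ?thesis using dyadic_nested_or_disjoint[of Q Q'] maxQ by blast
      qed
      then show ?thesis by blast
    qed
    have "set_integrable lebesgue (\<Union>((\<lambda>Q. Q) ` S')) G"
    proof (rule set_integrable_UN[OF fin'])
      fix Q assume "Q \<in> S'"
      then have "Q \<in> S" using S'S by blast
      then show "set_integrable lebesgue Q G" "Q \<in> sets lebesgue"
        using less.prems(2,3) dc_lmeas by (blast, blast)
    qed
    then have intS': "set_integrable lebesgue (\<Union>S') G" by simp
    have IH: "0 \<le> (LINT x:\<Union>S'|lebesgue. G x)"
      using less.hyps[OF card fin'] S'S less.prems by blast
    have "(LINT x:\<Union>S|lebesgue. G x) = (LINT x:Q|lebesgue. G x) + (LINT x:\<Union>S'|lebesgue. G x)"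
      unfolding un by (rule set_integral_Un[OF disj less.prems(3)[OF Q] intS'])
    then show ?thesis using IH less.prems(4)[OF Q] by simp
  qed
qed

lemma young_key:
  fixes p u v :: real
  assumes p: "1 < p" and u: "0 \<le> u" and v: "0 \<le> v"
  shows "p * (v * u powr (p - 1)) \<le> v powr p + (p - 1) * u powr p"
proof (cases "u = 0 \<or> v = 0")
  case True then show ?thesis using p u v by auto
next
  case False
  then have u0: "0 < u" and v0: "0 < v" using u v by auto
  have "(v powr p) powr (1/p) * (u powr p) powr ((p-1)/p) \<le> (1/p) * v powr p + ((p-1)/p) * u powr p"
    using p u0 v0 by (intro Youngs_inequality_0) (auto simp: field_simps)
  moreover have "(v powr p) powr (1/p) = v" using p v0 by (simp add: powr_powr)
  moreover have "(u powr p) powr ((p-1)/p) = u powr (p - 1)" using p u0 by (simp add: powr_powr)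
  ultimately have "v * u powr (p - 1) \<le> (1/p) * v powr p + ((p-1)/p) * u powr p" by simp
  then show ?thesis using p by (simp add: field_simps)
qed

lemma layer_ineq:
  fixes p u v :: real
  assumes p: "1 < p" and u: "0 \<le> u" and uv: "u < v"
  shows "(v powr p - u powr p) / v \<le> (p / (p - 1)) * (v powr (p - 1) - u powr (p - 1))"
proof -
  have v: "0 < v" using u uv by simp
  have vv: "v * v powr (p - 1) = v powr p" using v by (simp add: powr_mult_base)
  have "p * (v * u powr (p - 1)) \<le> v powr p + (p - 1) * u powr p" by (rule young_key[OF p u]) (use v in simp)
  then have "(p - 1) * (v powr p - u powr p) \<le> p * (v * (v powr (p - 1) - u powr (p - 1)))"
    using vv by (simp add: algebra_simps)
  then show ?thesis using v p by (simp add: field_simps)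
qed

lemma tangent_ineq:
  fixes p u v :: real
  assumes p: "1 < p" and u: "0 \<le> u" and v: "0 \<le> v"
  shows "u powr p \<le> v powr p + p * u powr (p - 1) * (u - v)"
proof -
  have uu: "u * u powr (p - 1) = u powr p"
    using u p by (cases "u = 0") (simp_all add: powr_mult_base)
  have "p * (v * u powr (p - 1)) \<le> v powr p + (p - 1) * u powr p" by (rule young_key[OF p u v])
  then show ?thesis using uu by (simp add: algebra_simps)
qed

lemma Lp_set_integrable:
  fixes g :: "real^'n::finite \<Rightarrow> real"
  assumes p: "1 < p" and gm: "g \<in> borel_measurable lebesgue"
    and gi: "integrable lebesgue (\<lambda>x. \<bar>g x\<bar> powr p)" and S: "S \<in> lmeasurable"
  shows "set_integrable lebesgue S g"
proof -
  have "integrable lebesgue (indicator S :: _ \<Rightarrow> real)"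
    using S by (intro integrable_real_indicator) (auto simp: fmeasurable_def)
  then have I1: "integrable lebesgue (\<lambda>x. indicator S x + \<bar>g x\<bar> powr p)"
    using gi by (rule Bochner_Integration.integrable_add)
  have B: "\<And>x. norm (indicator S x *\<^sub>R g x) \<le> norm (indicator S x + \<bar>g x\<bar> powr p)"
  proof -
    fix x
    have "\<bar>g x\<bar> \<le> 1 + \<bar>g x\<bar> powr p"
    proof (cases "\<bar>g x\<bar> \<le> 1")
      case True
      have "0 \<le> \<bar>g x\<bar> powr p" by simp
      then show ?thesis using True by linarith
    next
      case False
      then have "\<bar>g x\<bar> powr 1 \<le> \<bar>g x\<bar> powr p" using p by (intro powr_mono) auto
      then show ?thesis using False by simp
    qed
    then show "norm (indicator S x *\<^sub>R g x) \<le> norm (indicator S x + \<bar>g x\<bar> powr p)"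
      by (simp add: indicator_def)
  qed
  have M: "(\<lambda>x. indicator S x *\<^sub>R g x) \<in> borel_measurable lebesgue"
    using S gm by (intro borel_measurable_scaleR borel_measurable_indicator) (auto simp: fmeasurable_def)
  show ?thesis unfolding set_integrable_def
    by (rule Bochner_Integration.integrable_bound[OF I1 M]) (use B in auto)
qed



lemma sum_indicator_filter:
  assumes "finite V" "\<And>v. v \<in> V \<Longrightarrow> x \<in> A v \<longleftrightarrow> P v"
  shows "(\<Sum>v\<in>V. indicator (A v) x * h v) = (\<Sum>v\<in>{v\<in>V. P v}. h v :: real)"
proof -
  have "(\<Sum>v\<in>V. indicator (A v) x * h v) = (\<Sum>v\<in>V. if P v then h v else 0)"
    by (rule sum.cong) (auto simp: indicator_def assms)
  also have "\<dots> = (\<Sum>v\<in>{v\<in>V. P v}. h v)" by (rule sum.inter_filter[symmetric]) fact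
  finally show ?thesis .
qed

lemma lmeas_ind_int: 
  assumes S: "S \<in> lmeasurable" shows "integrable lebesgue (indicator S :: _ \<Rightarrow> real)"
proof -
  have "S \<in> sets lebesgue" using S by (rule fmeasurableD)
  moreover have "emeasure lebesgue S < \<infinity>" using fmeasurableD2[OF S] by (simp add: less_top)
  ultimately show ?thesis by (rule integrable_real_indicator)
qed

lemma carleson_finite:
  fixes g :: "real^'n::finite \<Rightarrow> real" and Q E :: "nat \<Rightarrow> (real^'n) set"
  assumes p: "1 < p" and g0: "\<And>x. 0 \<le> g x" and gm: "g \<in> borel_measurable lebesgue"
    and gi: "integrable lebesgue (\<lambda>x. g x powr p)"
    and J: "finite J" and QJ: "\<And>i. i \<in> J \<Longrightarrow> Q i \<in> dyadic_cubes"
    and Ed: "disjoint_family_on E J" and Em: "\<And>i. i \<in> J \<Longrightarrow> E i \<in> sets lebesgue"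
    and EQ: "\<And>i. i \<in> J \<Longrightarrow> E i \<subseteq> Q i"
    and Eh: "\<And>i. i \<in> J \<Longrightarrow> 1/2 * measure lebesgue (Q i) \<le> measure lebesgue (E i)"
  shows "(\<Sum>i\<in>J. measure lebesgue (Q i) * ((LINT x:Q i|lebesgue. g x) / measure lebesgue (Q i)) powr p)
         \<le> (8/3) * ((p/(p-1)) * (4*(p/(p-1))) powr (p-1)) * (\<integral>x. g x powr p \<partial>lebesgue)"
proof -
  define q where "q = p/(p-1)"
  define K where "K = q * (4*q) powr (p-1)"
  have q0: "0 < q" using p by (simp add: q_def)
  have K0: "0 \<le> K" using q0 by (simp add: K_def)
  have gi': "integrable lebesgue (\<lambda>x. \<bar>g x\<bar> powr p)" using gi g0 by (simp add: abs_of_nonneg)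
  have gint: "\<And>S. S \<in> lmeasurable \<Longrightarrow> integrable lebesgue (\<lambda>x. indicator S x * g x)"
    using Lp_set_integrable[OF p gm gi'] by (simp add: set_integrable_def)
  have sint: "\<And>S. (LINT x:S|lebesgue. g x) = (\<integral>x. indicator S x * g x \<partial>lebesgue)"
    by (simp add: set_lebesgue_integral_def)
  have sint0: "\<And>S. 0 \<le> (\<integral>x. indicator S x * g x \<partial>lebesgue)"
    by (rule integral_nonneg_AE) (simp add: g0)
  define a where "a i = (LINT x:Q i|lebesgue. g x) / measure lebesgue (Q i)" for i
  have a0: "\<And>i. 0 \<le> a i" unfolding a_def sint using sint0 by simp
  define V where "V = {v \<in> a ` J. 0 < v}"
  define A where "A v = \<Union>(Q ` {i\<in>J. v \<le> a i})" for v
  define M where "M x = Max (insert 0 (a ` {i\<in>J. x \<in> Q i}))" for x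
  have finV: "finite V" using J by (simp add: V_def)
  have posV: "\<forall>v\<in>V. 0 < v" by (simp add: V_def)
  have finM: "\<And>x. finite (insert 0 (a ` {i\<in>J. x \<in> Q i}))" using J by simp
  have M_in: "\<And>x. M x \<in> insert 0 V"
  proof -
    fix x
    have "M x \<in> insert 0 (a ` {i\<in>J. x \<in> Q i})" unfolding M_def by (rule Max_in[OF finM]) simp
    then show "M x \<in> insert 0 V" unfolding V_def using a0 by (auto simp: less_le)
  qed
  have M0: "\<And>x. 0 \<le> M x" unfolding M_def using finM by (simp add: Max_ge_iff)
  have M_ge: "\<And>x i. i \<in> J \<Longrightarrow> x \<in> Q i \<Longrightarrow> a i \<le> M x"
    unfolding M_def using finM by (auto intro: Max_ge)
  have Aiff: "\<And>v x. v \<in> V \<Longrightarrow> x \<in> A v \<longleftrightarrow> v \<le> M x"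
  proof
    fix v x assume v: "v \<in> V" and "x \<in> A v"
    then obtain i where "i \<in> J" "v \<le> a i" "x \<in> Q i" unfolding A_def by auto
    then show "v \<le> M x" using M_ge by force
  next
    fix v x assume v: "v \<in> V" and vM: "v \<le> M x"
    then have "0 < M x" using posV by force
    moreover have "M x \<in> insert 0 (a ` {i\<in>J. x \<in> Q i})" unfolding M_def by (rule Max_in[OF finM]) simp
    ultimately obtain i where "i \<in> J" "x \<in> Q i" "M x = a i" by auto
    then show "x \<in> A v" unfolding A_def using vM by auto
  qed
  have Ameas: "\<And>v. A v \<in> lmeasurable"
    unfolding A_def using J QJ dc_lmeas by (intro fmeasurable.finite_UN) auto
  define d where "d v = v powr p - pr V v powr p" for v
  define e where "e v = v powr (p-1) - pr V v powr (p-1)" for v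
  define \<Phi> where "\<Phi> x = (\<Sum>v\<in>V. indicator (A v) x * d v)" for x
  define \<Psi> where "\<Psi> x = (\<Sum>v\<in>V. indicator (A v) x * e v)" for x
  have \<Phi>eq: "\<And>x. \<Phi> x = M x powr p"
  proof -
    fix x
    have "\<Phi> x = (\<Sum>v\<in>{v\<in>V. v \<le> M x}. d v)"
      unfolding \<Phi>_def by (rule sum_indicator_filter[OF finV Aiff])
    also have "\<dots> = M x powr p"
      unfolding d_def by (rule telescope[OF finV posV _ M_in]) simp
    finally show "\<Phi> x = M x powr p" .
  qed
  have \<Psi>eq: "\<And>x. \<Psi> x = M x powr (p-1)"
  proof -
    fix x
    have "\<Psi> x = (\<Sum>v\<in>{v\<in>V. v \<le> M x}. e v)"
      unfolding \<Psi>_def by (rule sum_indicator_filter[OF finV Aiff])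
    also have "\<dots> = M x powr (p-1)"
      unfolding e_def by (rule telescope[OF finV posV _ M_in]) simp
    finally show "\<Psi> x = M x powr (p-1)" .
  qed
  have indint: "\<And>v. integrable lebesgue (indicator (A v) :: _ \<Rightarrow> real)"
    using Ameas by (rule lmeas_ind_int)
  have \<Phi>int: "integrable lebesgue \<Phi>"
    unfolding \<Phi>_def using indint by (intro Bochner_Integration.integrable_sum integrable_mult_left) auto
  have g\<Psi>eq: "\<And>x. g x * \<Psi> x = (\<Sum>v\<in>V. (indicator (A v) x * g x) * e v)"
    unfolding \<Psi>_def by (simp add: sum_distrib_left algebra_simps)
  have g\<Psi>int: "integrable lebesgue (\<lambda>x. g x * \<Psi> x)"
    unfolding g\<Psi>eq using gint[OF Ameas] by (intro Bochner_Integration.integrable_sum integrable_mult_left) auto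
  have int\<Phi>: "integral\<^sup>L lebesgue \<Phi> = (\<Sum>v\<in>V. measure lebesgue (A v) * d v)"
    unfolding \<Phi>_def using indint
    by (subst Bochner_Integration.integral_sum) (auto simp: integral_indicator)
  have intg\<Psi>: "(\<integral>x. g x * \<Psi> x \<partial>lebesgue) = (\<Sum>v\<in>V. (\<integral>x. indicator (A v) x * g x \<partial>lebesgue) * e v)"
    unfolding g\<Psi>eq using gint[OF Ameas]
    by (subst Bochner_Integration.integral_sum) auto
  have weak: "\<And>v. v \<in> V \<Longrightarrow> v * measure lebesgue (A v) \<le> (\<integral>x. indicator (A v) x * g x \<partial>lebesgue)"
  proof -
    fix v assume v: "v \<in> V"
    let ?S = "Q ` {i\<in>J. v \<le> a i}"
    have cint: "\<And>S. S \<in> lmeasurable \<Longrightarrow> set_integrable lebesgue S (\<lambda>x. g x - v)"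
    proof -
      fix S :: "(real^'n) set" assume S: "S \<in> lmeasurable"
      have "set_integrable lebesgue S g" using gint[OF S] by (simp add: set_integrable_def)
      moreover have "set_integrable lebesgue S (\<lambda>_. v)"
        unfolding set_integrable_def using lmeas_ind_int[OF S]
        by (intro integrable_scaleR_left) auto
      ultimately show "set_integrable lebesgue S (\<lambda>x. g x - v)" by (rule set_integral_diff(1))
    qed
    have cval: "\<And>S. S \<in> lmeasurable \<Longrightarrow> (LINT x:S|lebesgue. g x - v) = (\<integral>x. indicator S x * g x \<partial>lebesgue) - v * measure lebesgue S"
    proof -
      fix S :: "(real^'n) set" assume S: "S \<in> lmeasurable"
      have "set_integrable lebesgue S g" using gint[OF S] by (simp add: set_integrable_def)
      moreover have "set_integrable lebesgue S (\<lambda>_. v)"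
        unfolding set_integrable_def using lmeas_ind_int[OF S]
        by (intro integrable_scaleR_left) auto
      ultimately have "(LINT x:S|lebesgue. g x - v) = (LINT x:S|lebesgue. g x) - (LINT x:S|lebesgue. v)"
        by (rule set_integral_diff(2))
      also have "(LINT x:S|lebesgue. v) = v * measure lebesgue S"
        unfolding set_lebesgue_integral_def
        using integral_scaleR_left[of v lebesgue "indicator S :: _ \<Rightarrow> real"] lmeas_ind_int[OF S]
        by (simp add: integral_indicator)
      finally show "(LINT x:S|lebesgue. g x - v) = (\<integral>x. indicator S x * g x \<partial>lebesgue) - v * measure lebesgue S"
        by (simp add: sint)
    qed
    have "0 \<le> (LINT x:\<Union>?S|lebesgue. g x - v)"
    proof (rule union_nonneg)
      show "finite ?S" using J by simp
      show "?S \<subseteq> dyadic_cubes" using QJ by auto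
      fix R assume "R \<in> ?S"
      then obtain i where i: "i \<in> J" "v \<le> a i" "R = Q i" by auto
      have Rl: "R \<in> lmeasurable" using i QJ dc_lmeas by auto
      show "set_integrable lebesgue R (\<lambda>x. g x - v)" by (rule cint[OF Rl])
      have mpos: "0 < measure lebesgue R" using i QJ dc_measure_pos by auto
      have "v * measure lebesgue R \<le> a i * measure lebesgue R" using i mpos by simp
      also have "\<dots> = (\<integral>x. indicator R x * g x \<partial>lebesgue)"
        using mpos i by (simp add: a_def sint)
      finally show "0 \<le> (LINT x:R|lebesgue. g x - v)" using cval[OF Rl] by simp
    qed
    moreover have "\<Union>?S = A v" by (simp add: A_def)
    ultimately show "v * measure lebesgue (A v) \<le> (\<integral>x. indicator (A v) x * g x \<partial>lebesgue)"
      using cval[OF Ameas[of v]] by simp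
  qed
  have de: "\<And>v. v \<in> V \<Longrightarrow> 0 \<le> e v \<and> d v \<le> q * v * e v"
  proof -
    fix v assume v: "v \<in> V"
    have v0: "0 < v" using v posV by auto
    note P = pr_props[OF finV posV v0]
    have "(v powr p - pr V v powr p) / v \<le> q * e v"
      unfolding q_def e_def by (rule layer_ineq[OF p P(3) P(2)])
    then have "d v \<le> q * v * e v" using v0 by (simp add: d_def field_simps)
    moreover have "0 \<le> e v" unfolding e_def using P(2,3) p by (auto intro!: powr_mono2)
    ultimately show "0 \<le> e v \<and> d v \<le> q * v * e v" by simp
  qed
  have main1: "integral\<^sup>L lebesgue \<Phi> \<le> q * (\<integral>x. g x * \<Psi> x \<partial>lebesgue)"
  proof -
    have "integral\<^sup>L lebesgue \<Phi> \<le> (\<Sum>v\<in>V. q * ((\<integral>x. indicator (A v) x * g x \<partial>lebesgue) * e v))"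
      unfolding int\<Phi>
    proof (rule sum_mono)
      fix v assume v: "v \<in> V"
      have m0: "0 \<le> measure lebesgue (A v)" by simp
      have "measure lebesgue (A v) * d v \<le> measure lebesgue (A v) * (q * v * e v)"
        using de[OF v] m0 by (intro mult_left_mono) auto
      also have "\<dots> = q * e v * (v * measure lebesgue (A v))" by simp
      also have "\<dots> \<le> q * e v * (\<integral>x. indicator (A v) x * g x \<partial>lebesgue)"
        using weak[OF v] de[OF v] q0 by (intro mult_left_mono) auto
      finally show "measure lebesgue (A v) * d v \<le> q * ((\<integral>x. indicator (A v) x * g x \<partial>lebesgue) * e v)"
        by (simp add: algebra_simps)
    qed
    also have "\<dots> = q * (\<integral>x. g x * \<Psi> x \<partial>lebesgue)"
      unfolding intg\<Psi> by (simp add: sum_distrib_left)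
    finally show ?thesis .
  qed
  have main2: "\<And>x. q * (g x * \<Psi> x) \<le> 1/4 * \<Phi> x + K * g x powr p"
  proof -
    fix x
    have gx: "0 \<le> g x" by (rule g0)
    show "q * (g x * \<Psi> x) \<le> 1/4 * \<Phi> x + K * g x powr p"
    proof (cases "M x \<le> 4 * q * g x")
      case True
      have "M x powr (p-1) \<le> (4 * q * g x) powr (p-1)"
        using True M0 p by (intro powr_mono2) auto
      also have "\<dots> = (4*q) powr (p-1) * g x powr (p-1)"
        using q0 gx by (simp add: powr_mult)
      finally have "q * (g x * \<Psi> x) \<le> q * (g x * ((4*q) powr (p-1) * g x powr (p-1)))"
        unfolding \<Psi>eq using q0 gx by (intro mult_left_mono) auto
      also have "\<dots> = K * (g x * g x powr (p-1))" by (simp add: K_def algebra_simps)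
      also have "g x * g x powr (p-1) = g x powr p"
        using gx p by (cases "g x = 0") (simp_all add: powr_mult_base)
      finally have X: "q * (g x * \<Psi> x) \<le> K * g x powr p" by simp
      have "0 \<le> M x powr p" by simp
      then show ?thesis using X \<Phi>eq[of x] by linarith
    next
      case False
      then have Mp: "0 < M x" using q0 gx by (smt (verit) mult_nonneg_nonneg)
      have "q * (g x * \<Psi> x) = (q * g x) * M x powr (p-1)" unfolding \<Psi>eq by simp
      also have "\<dots> \<le> (M x / 4) * M x powr (p-1)"
        using False by (intro mult_right_mono) auto
      also have "\<dots> = 1/4 * (M x * M x powr (p-1))" by simp
      also have "M x * M x powr (p-1) = M x powr p" using Mp by (simp add: powr_mult_base)
      finally show ?thesis using \<Phi>eq[of x] K0 by (simp add: add_increasing2)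
    qed
  qed
  have main3: "integral\<^sup>L lebesgue \<Phi> \<le> 1/4 * integral\<^sup>L lebesgue \<Phi> + K * (\<integral>x. g x powr p \<partial>lebesgue)"
  proof -
    have "q * (\<integral>x. g x * \<Psi> x \<partial>lebesgue) = (\<integral>x. q * (g x * \<Psi> x) \<partial>lebesgue)" by simp
    also have "\<dots> \<le> (\<integral>x. 1/4 * \<Phi> x + K * g x powr p \<partial>lebesgue)"
      using g\<Psi>int \<Phi>int gi main2 by (intro integral_mono) auto
    also have "\<dots> = 1/4 * integral\<^sup>L lebesgue \<Phi> + K * (\<integral>x. g x powr p \<partial>lebesgue)"
      using \<Phi>int gi by simp
    finally show ?thesis using main1 by simp
  qed
  then have main4: "integral\<^sup>L lebesgue \<Phi> \<le> 4/3 * K * (\<integral>x. g x powr p \<partial>lebesgue)" by simp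
  have Elm: "\<And>i. i \<in> J \<Longrightarrow> E i \<in> lmeasurable"
    using Em EQ QJ dc_lmeas by (meson fmeasurableI2)
  have Eint: "\<And>i. i \<in> J \<Longrightarrow> integrable lebesgue (indicator (E i) :: _ \<Rightarrow> real)"
    using Elm by (rule lmeas_ind_int)
  have pw: "\<And>x. (\<Sum>i\<in>J. indicator (E i) x * a i powr p) \<le> \<Phi> x"
  proof -
    fix x
    show "(\<Sum>i\<in>J. indicator (E i) x * a i powr p) \<le> \<Phi> x"
    proof (cases "\<exists>i\<in>J. x \<in> E i")
      case True
      then obtain i0 where i0: "i0 \<in> J" "x \<in> E i0" by blast
      have "(\<Sum>i\<in>J. indicator (E i) x * a i powr p) = indicator (E i0) x * a i0 powr p + (\<Sum>i\<in>J-{i0}. indicator (E i) x * a i powr p)"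
        by (rule sum.remove[OF J i0(1)])
      also have "(\<Sum>i\<in>J-{i0}. indicator (E i) x * a i powr p) = 0"
      proof (rule sum.neutral, rule ballI)
        fix i assume "i \<in> J - {i0}"
        then have "E i \<inter> E i0 = {}" using Ed i0(1) unfolding disjoint_family_on_def by auto
        then show "indicator (E i) x * a i powr p = 0" using i0(2) by (auto simp: indicator_def)
      qed
      also have "indicator (E i0) x * a i0 powr p + 0 = a i0 powr p" using i0 by simp
      also have "\<dots> \<le> M x powr p"
        using M_ge[OF i0(1)] EQ[OF i0(1)] i0(2) a0 p by (intro powr_mono2) auto
      finally show ?thesis using \<Phi>eq by simp
    next
      case False
      then have "(\<Sum>i\<in>J. indicator (E i) x * a i powr p) = 0" by (intro sum.neutral) auto
      then show ?thesis using \<Phi>eq M0 by simp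
    qed
  qed
  have sumEint: "integrable lebesgue (\<lambda>x. \<Sum>i\<in>J. indicator (E i) x * a i powr p)"
    using Eint by (intro Bochner_Integration.integrable_sum integrable_mult_left) auto
  have "(\<Sum>i\<in>J. measure lebesgue (Q i) * a i powr p) \<le> (\<Sum>i\<in>J. 2 * (measure lebesgue (E i) * a i powr p))"
  proof (rule sum_mono)
    fix i assume i: "i \<in> J"
    have "measure lebesgue (Q i) \<le> 2 * measure lebesgue (E i)" using Eh[OF i] by simp
    then have "measure lebesgue (Q i) * a i powr p \<le> (2 * measure lebesgue (E i)) * a i powr p"
      by (rule mult_right_mono) simp
    then show "measure lebesgue (Q i) * a i powr p \<le> 2 * (measure lebesgue (E i) * a i powr p)"
      by simp
  qed
  also have "\<dots> = 2 * (\<integral>x. (\<Sum>i\<in>J. indicator (E i) x * a i powr p) \<partial>lebesgue)"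
    using Eint by (subst Bochner_Integration.integral_sum) (auto simp: integral_indicator sum_distrib_left)
  also have "\<dots> \<le> 2 * integral\<^sup>L lebesgue \<Phi>"
    using sumEint \<Phi>int pw by (simp add: integral_mono)
  also have "\<dots> \<le> 2 * (4/3 * K * (\<integral>x. g x powr p \<partial>lebesgue))" using main4 by simp
  finally show ?thesis unfolding a_def K_def q_def by simp
qed



lemma term_eq:
  fixes \<mu> s p :: real
  assumes p: "1 < p" and mu: "0 < \<mu>" and s: "0 \<le> s"
  shows "(\<mu> powr (- 1 / dual_exp p) * s) powr p = \<mu> * (s / \<mu>) powr p"
proof -
  have e: "- 1 / dual_exp p = (1 - p) / p" using p by (simp add: dual_exp_def field_simps)
  have L1: "(\<mu> powr (- 1 / dual_exp p) * s) powr p = (\<mu> powr ((1 - p) / p)) powr p * s powr p"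
    unfolding e using mu s by (simp add: powr_mult)
  have L2: "(\<mu> powr ((1 - p) / p)) powr p = \<mu> powr (1 - p)" using p mu by (simp add: powr_powr)
  have R1: "\<mu> * (s / \<mu>) powr p = \<mu> * (s powr p / \<mu> powr p)" using mu s by (simp add: powr_divide)
  have R2: "\<mu> * (s powr p / \<mu> powr p) = \<mu> powr (1 - p) * s powr p" using mu by (simp add: powr_diff powr_mult_base)
  show ?thesis using L1 L2 R1 R2 by simp
qed

lemma sr_sum_bound:
  fixes f :: "real^'n::finite \<Rightarrow> real"
  assumes p: "1 < p" and fm: "f \<in> borel_measurable lebesgue"
    and fi: "integrable lebesgue (\<lambda>x. \<bar>f x\<bar> powr p)" and sp: "sparse Q I"
  shows "sr_sum p f Q I \<le> ennreal ((8/3) * ((p/(p-1)) * (4*(p/(p-1))) powr (p-1)) * (\<integral>x. \<bar>f x\<bar> powr p \<partial>lebesgue))"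
proof -
  let ?C = "(8/3) * ((p/(p-1)) * (4*(p/(p-1))) powr (p-1)) * (\<integral>x. \<bar>f x\<bar> powr p \<partial>lebesgue)"
  obtain E where QI: "\<And>i. i \<in> I \<Longrightarrow> Q i \<in> dyadic_cubes" and Ed: "disjoint_family_on E I"
    and Ep: "\<And>i. i \<in> I \<Longrightarrow> E i \<in> sets lebesgue \<and> E i \<subseteq> Q i \<and> measure lebesgue (E i) \<ge> 1/2 * measure lebesgue (Q i)"
    using sp unfolding sparse_def by blast
  define t where "t i = (measure lebesgue (Q i) powr (- 1 / dual_exp p) * (LINT x:Q i|lebesgue. \<bar>f x\<bar>)) powr p" for i
  have t0: "\<And>i. 0 \<le> t i" by (simp add: t_def)
  have nonneg: "\<And>S. 0 \<le> (LINT x:S|lebesgue. \<bar>f x\<bar>)"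
    unfolding set_lebesgue_integral_def by (rule integral_nonneg_AE) simp
  have teq: "\<And>i. i \<in> I \<Longrightarrow> t i = measure lebesgue (Q i) * ((LINT x:Q i|lebesgue. \<bar>f x\<bar>) / measure lebesgue (Q i)) powr p"
    unfolding t_def using p dc_measure_pos QI nonneg by (intro term_eq) auto
  have "sr_sum p f Q I = (\<Sum>i. if i \<in> I then ennreal (t i) else 0)"
    unfolding sr_sum_def t_def by simp
  also have "\<dots> \<le> ennreal ?C"
  proof (rule suminf_le_const)
    show "summable (\<lambda>i. if i \<in> I then ennreal (t i) else 0)" by (rule summableI)
    fix n
    let ?J = "I \<inter> {..<n}"
    have "(\<Sum>i\<in>{..<n} \<inter> I. ennreal (t i)) = (\<Sum>i<n. if i \<in> I then ennreal (t i) else 0)"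
      by (rule sum.inter_restrict) simp
    then have "(\<Sum>i<n. if i \<in> I then ennreal (t i) else 0) = (\<Sum>i\<in>?J. ennreal (t i))"
      by (simp add: Int_commute)
    also have "\<dots> = ennreal (\<Sum>i\<in>?J. t i)" using t0 by (simp add: sum_ennreal)
    also have "(\<Sum>i\<in>?J. t i) = (\<Sum>i\<in>?J. measure lebesgue (Q i) * ((LINT x:Q i|lebesgue. \<bar>f x\<bar>) / measure lebesgue (Q i)) powr p)"
      using teq by (intro sum.cong) auto
    also have "\<dots> \<le> ?C"
    proof (rule carleson_finite[where E=E])
      show "1 < p" by fact
      show "\<And>x. 0 \<le> \<bar>f x\<bar>" by simp
      show "(\<lambda>x. \<bar>f x\<bar>) \<in> borel_measurable lebesgue" using fm by measurable
      show "integrable lebesgue (\<lambda>x. \<bar>f x\<bar> powr p)" using fi by simp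
      show "finite ?J" by simp
      show "\<And>i. i \<in> ?J \<Longrightarrow> Q i \<in> dyadic_cubes" using QI by auto
      show "disjoint_family_on E ?J" using Ed by (rule disjoint_family_on_mono[rotated]) auto
      show "\<And>i. i \<in> ?J \<Longrightarrow> E i \<in> sets lebesgue" "\<And>i. i \<in> ?J \<Longrightarrow> E i \<subseteq> Q i"
        "\<And>i. i \<in> ?J \<Longrightarrow> 1/2 * measure lebesgue (Q i) \<le> measure lebesgue (E i)"
        using Ep by auto
    qed
    finally show "(\<Sum>i<n. if i \<in> I then ennreal (t i) else 0) \<le> ennreal ?C" by (simp add: ennreal_leI)
  qed
  finally show ?thesis .
qed

lemma Lp_sub_SR:
  fixes f :: "real^'n::finite \<Rightarrow> real"
  assumes p: "1 < p" and f: "f \<in> Lp p"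
  shows "f \<in> SR_pp p"
proof -
  have fm: "f \<in> borel_measurable lebesgue" and fi: "integrable lebesgue (\<lambda>x. \<bar>f x\<bar> powr p)"
    using f by (auto simp: Lp_def)
  have "loc_integrable f"
    unfolding loc_integrable_def using Lp_set_integrable[OF p fm fi] lmeasurable_compact by blast
  moreover have "sr_norm_p p f < \<infinity>"
  proof -
    have "sr_norm_p p f \<le> ennreal ((8/3) * ((p/(p-1)) * (4*(p/(p-1))) powr (p-1)) * (\<integral>x. \<bar>f x\<bar> powr p \<partial>lebesgue))"
      unfolding sr_norm_p_def using sr_sum_bound[OF p fm fi] by (auto intro!: SUP_least)
    also have "\<dots> < \<infinity>" by simp
    finally show ?thesis .
  qed
  ultimately show ?thesis by (simp add: SR_pp_def)
qed



definition TT :: "real \<Rightarrow> (real^'n::finite) set" where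
  "TT R = {x. \<forall>i. \<bar>x$i\<bar> \<le> R}"

definition grid :: "nat \<Rightarrow> real \<Rightarrow> ('n::finite \<Rightarrow> int) set" where
  "grid k R = {m. \<forall>i. \<bar>m i\<bar> \<le> \<lceil>2 ^ k * R\<rceil> + 1}"

definition avg :: "nat \<Rightarrow> (real^'n::finite \<Rightarrow> real) \<Rightarrow> ('n \<Rightarrow> int) \<Rightarrow> real" where
  "avg k h m = (\<integral>x. indicator (dyadic_cube (int k) m) x * h x \<partial>lebesgue) / measure lebesgue (dyadic_cube (int k) m)"

definition Ek :: "nat \<Rightarrow> (real^'n::finite \<Rightarrow> real) \<Rightarrow> real^'n \<Rightarrow> real" where
  "Ek k h x = avg k h (idx (int k) x)"

definition BS :: "real \<Rightarrow> (real^'n::finite \<Rightarrow> real) \<Rightarrow> bool" where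
  "BS R h \<longleftrightarrow> h \<in> borel_measurable lebesgue \<and> (\<exists>N. \<forall>x. \<bar>h x\<bar> \<le> N) \<and> (\<forall>x. x \<notin> TT R \<longrightarrow> h x = 0)"

lemma TT_cbox: "(TT R :: (real^'n::finite) set) = cbox (- (\<chi> i. R)) (\<chi> i. R)"
proof (rule set_eqI)
  fix x :: "real^'n"
  have "\<And>i. \<bar>x$i\<bar> \<le> R \<longleftrightarrow> -R \<le> x$i \<and> x$i \<le> R" by auto
  then show "x \<in> TT R \<longleftrightarrow> x \<in> cbox (- (\<chi> i. R)) (\<chi> i. R)"
    by (simp add: TT_def mem_box_cart)
qed

lemma TT_lmeas: "TT R \<in> lmeasurable"
  unfolding TT_cbox by simp

lemma TT_compact: "compact (TT R)"
  unfolding TT_cbox by simp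

lemma TT_mono: "R \<le> R' \<Longrightarrow> TT R \<subseteq> TT R'"
  by (auto simp: TT_def intro: order_trans)

lemma finite_grid: "finite (grid k R :: ('n::finite \<Rightarrow> int) set)"
proof -
  let ?c = "\<lceil>2 ^ k * R\<rceil> + 1"
  have "grid k R \<subseteq> Pi\<^sub>E UNIV (\<lambda>_. {-?c..?c})"
  proof
    fix m assume "m \<in> grid k R"
    then have "\<And>i. \<bar>m i\<bar> \<le> ?c" by (simp add: grid_def)
    have "\<And>i. m i \<in> {-?c..?c}"
    proof -
      fix i have "\<bar>m i\<bar> \<le> ?c" using \<open>\<And>i. \<bar>m i\<bar> \<le> ?c\<close> by blast
      then show "m i \<in> {-?c..?c}" by (auto simp: abs_le_iff)
    qed
    then show "m \<in> Pi\<^sub>E UNIV (\<lambda>_. {-?c..?c})" by (simp add: PiE_UNIV_domain Pi_def)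
  qed
  moreover have "finite (Pi\<^sub>E (UNIV::'n set) (\<lambda>_. {-?c..?c}))" by (intro finite_PiE) auto
  ultimately show ?thesis by (rule finite_subset)
qed

lemma idx_grid:
  assumes "x \<in> TT R" shows "idx (int k) x \<in> grid k R"
proof -
  have "\<bar>\<lfloor>2 ^ k * x $ i\<rfloor>\<bar> \<le> \<lceil>2 ^ k * R\<rceil> + 1" for i
  proof -
    have "\<bar>x$i\<bar> \<le> R" using assms by (simp add: TT_def)
    then have xi: "-R \<le> x$i" "x$i \<le> R" by auto
    have p: "(0::real) < 2 ^ k" by simp
    have a1: "2 ^ k * x $ i \<le> 2 ^ k * R" using xi p by (auto intro: mult_left_mono)
    have "2 ^ k * (-R) \<le> 2 ^ k * x $ i" using xi p by (intro mult_left_mono) auto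
    then have a: "2 ^ k * x $ i \<le> 2 ^ k * R" "- (2 ^ k * R) \<le> 2 ^ k * x $ i" using a1 by auto
    have "\<lfloor>2 ^ k * x $ i\<rfloor> \<le> \<lceil>2 ^ k * R\<rceil>"
      using a(1) by (meson floor_le_ceiling floor_mono order_trans le_of_int_ceiling of_int_floor_le)
    moreover have "- (\<lceil>2 ^ k * R\<rceil>) - 1 \<le> \<lfloor>2 ^ k * x $ i\<rfloor>"
    proof -
      have "\<lfloor>- (2 ^ k * R)\<rfloor> \<le> \<lfloor>2 ^ k * x $ i\<rfloor>" by (rule floor_mono) (rule a(2))
      moreover have "\<lfloor>- (2 ^ k * R)\<rfloor> = - \<lceil>2 ^ k * R\<rceil>" by (simp add: ceiling_def)
      ultimately show ?thesis by linarith
    qed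
    ultimately show ?thesis by linarith
  qed
  then show ?thesis by (simp add: grid_def idx_def powr_realpow)
qed

lemma cube_diam:
  assumes "x \<in> dyadic_cube k m" "y \<in> dyadic_cube k m"
  shows "\<bar>x$i - y$i\<bar> < 2 powr (- real_of_int k)"
proof -
  let ?s = "2 powr (- real_of_int k)"
  have "?s * m i \<le> x$i" "x$i < ?s * m i + ?s" "?s * m i \<le> y$i" "y$i < ?s * m i + ?s"
    using assms unfolding dyadic_cube_def by (auto simp: algebra_simps)
  then show ?thesis by (simp add: abs_less_iff)
qed

lemma cube_meets_TT:
  assumes "x \<in> dyadic_cube (int k) m" "y \<in> dyadic_cube (int k) m" "x \<in> TT R"
  shows "y \<in> TT (R + 1)"
proof -
  have "2 powr (- real k) \<le> 2 powr 0" by (rule powr_mono) auto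
  then have s1: "2 powr (- real_of_int (int k)) \<le> 1" by simp
  have "\<bar>y$i\<bar> \<le> R + 1" for i
  proof -
    have "\<bar>x$i\<bar> \<le> R" using assms(3) by (simp add: TT_def)
    moreover have "\<bar>x$i - y$i\<bar> < 2 powr (- real_of_int (int k))" by (rule cube_diam[OF assms(1,2)])
    ultimately show ?thesis using s1 by linarith
  qed
  then show ?thesis by (simp add: TT_def)
qed

lemma avg_zero:
  assumes "\<And>y. y \<in> dyadic_cube (int k) m \<Longrightarrow> h y = 0"
  shows "avg k h m = 0"
proof -
  have "(\<lambda>x. indicator (dyadic_cube (int k) m) x * h x) = (\<lambda>x. 0)"
    using assms by (auto simp: indicator_def)
  then show ?thesis by (simp add: avg_def)
qed

lemma rep_gen:
  fixes a :: "('n::finite \<Rightarrow> int) \<Rightarrow> real"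
  assumes F: "finite F" and a: "\<And>m. m \<notin> F \<Longrightarrow> a m = 0"
  shows "a (idx (int k) x) = (\<Sum>m\<in>F. a m * indicator (dyadic_cube (int k) m) x)"
proof -
  have "(\<Sum>m\<in>F. a m * indicator (dyadic_cube (int k) m) x) = (\<Sum>m\<in>F. if idx (int k) x = m then a m else 0)"
    by (rule sum.cong) (auto simp: indicator_def mem_cube_iff)
  also have "\<dots> = (if idx (int k) x \<in> F then a (idx (int k) x) else 0)"
    using F by (simp add: sum.delta)
  finally show ?thesis using a by auto
qed

lemma BS_integrable: assumes "BS R h" shows "integrable lebesgue h"
proof -
  obtain N where N: "\<And>x. \<bar>h x\<bar> \<le> N" using assms by (auto simp: BS_def)
  have I: "integrable lebesgue (\<lambda>x. N * indicator (TT R) x)"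
    by (intro integrable_mult_right lmeas_ind_int TT_lmeas)
  have N0: "0 \<le> N" using N[of undefined] by linarith
  have "norm (h x) \<le> norm (N * indicator (TT R) x)" for x
  proof (cases "x \<in> TT R")
    case True then show ?thesis using N[of x] N0 by simp
  next
    case False then have "h x = 0" using assms by (simp add: BS_def)
    then show ?thesis by simp
  qed
  then show ?thesis
    by (intro Bochner_Integration.integrable_bound[OF I]) (use assms in \<open>auto simp: BS_def\<close>)
qed

lemma BS_ind_int: "BS R h \<Longrightarrow> S \<in> sets lebesgue \<Longrightarrow> integrable lebesgue (\<lambda>x. indicator S x * h x)"
  using integrable_mult_indicator[OF _ BS_integrable] by (simp add: scaleR_conv_of_real)

lemma BS_mono: "BS R h \<Longrightarrow> R \<le> R' \<Longrightarrow> BS R' h"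
  unfolding BS_def using TT_mono by blast

lemma BS_avg_zero: "BS R h \<Longrightarrow> m \<notin> grid k R \<Longrightarrow> avg k h m = 0"
  by (rule avg_zero) (metis BS_def idx_grid mem_cube_iff)

lemma BS_rep:
  fixes \<phi> :: "real \<Rightarrow> real"
  assumes "BS R h" "\<phi> 0 = 0"
  shows "\<phi> (Ek k h x) = (\<Sum>m\<in>grid k R. \<phi> (avg k h m) * indicator (dyadic_cube (int k) m) x)"
  unfolding Ek_def using rep_gen[where a = "\<lambda>m. \<phi> (avg k h m)" and F = "grid k R", OF finite_grid] BS_avg_zero[OF assms(1)] assms(2)
  by simp

lemma rep_integrable:
  fixes c :: "('n::finite \<Rightarrow> int) \<Rightarrow> real"
  shows "finite F \<Longrightarrow> integrable lebesgue (\<lambda>x. \<Sum>m\<in>F. c m * indicator (dyadic_cube (int k) m) x)"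
  by (intro Bochner_Integration.integrable_sum integrable_mult_right lmeas_ind_int cube_lmeasurable)

lemma rep_integral:
  fixes c :: "('n::finite \<Rightarrow> int) \<Rightarrow> real"
  shows "finite F \<Longrightarrow> (\<integral>x. (\<Sum>m\<in>F. c m * indicator (dyadic_cube (int k) m) x) \<partial>lebesgue)
     = (\<Sum>m\<in>F. c m * measure lebesgue (dyadic_cube (int k) m))"
  by (subst Bochner_Integration.integral_sum)
     (auto intro!: integrable_mult_right lmeas_ind_int cube_lmeasurable simp: integral_indicator)

lemma avg_mult: "avg k h m * measure lebesgue (dyadic_cube (int k) m) = (\<integral>x. indicator (dyadic_cube (int k) m) x * h x \<partial>lebesgue)"
  unfolding avg_def using cube_measure_pos[of "int k" m] by simp

lemma BS_Ek: assumes "BS R h" shows "BS (R + 1) (Ek k h)"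
proof -
  obtain N where N: "\<And>x. \<bar>h x\<bar> \<le> N" using assms by (auto simp: BS_def)
  have "Ek k h \<in> borel_measurable lebesgue"
  proof -
    have "\<And>x. Ek k h x = (\<Sum>m\<in>grid k R. avg k h m * indicator (dyadic_cube (int k) m) x)"
      using BS_rep[OF assms, of "\<lambda>t. t"] by simp
    then have eq: "Ek k h = (\<lambda>x. \<Sum>m\<in>grid k R. avg k h m * indicator (dyadic_cube (int k) m) x)"
      by (rule ext)
    show ?thesis unfolding eq by (rule borel_measurable_integrable[OF rep_integrable[OF finite_grid]])
  qed
  moreover have "\<bar>Ek k h x\<bar> \<le> N" for x
  proof -
    let ?Q = "dyadic_cube (int k) (idx (int k) x)"
    have mpos: "0 < measure lebesgue ?Q" by (rule cube_measure_pos)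
    have "\<bar>\<integral>y. indicator ?Q y * h y \<partial>lebesgue\<bar> \<le> (\<integral>y. N * indicator ?Q y \<partial>lebesgue)"
      using N by (intro integral_abs_bound_integral BS_ind_int[OF assms] cube_lebesgue
          integrable_mult_right lmeas_ind_int cube_lmeasurable)
        (auto simp: indicator_def abs_mult)
    also have "\<dots> = N * measure lebesgue ?Q" by (simp add: integral_indicator)
    finally show ?thesis unfolding Ek_def avg_def using mpos by (simp add: abs_div divide_le_eq)
  qed
  moreover have "Ek k h x = 0" if "x \<notin> TT (R + 1)" for x
    unfolding Ek_def
  proof (rule avg_zero)
    fix y assume y: "y \<in> dyadic_cube (int k) (idx (int k) x)"
    have "x \<in> dyadic_cube (int k) (idx (int k) x)" by (simp add: mem_cube_iff)
    then have "y \<notin> TT R" using cube_meets_TT[OF y] that by blast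
    then show "h y = 0" using assms by (auto simp: BS_def)
  qed
  ultimately show ?thesis unfolding BS_def by blast
qed



lemma BS_abs: "BS R h \<Longrightarrow> BS R (\<lambda>x. \<bar>h x\<bar>)"
  unfolding BS_def by auto

lemma BS_diff: assumes "BS R h1" "BS R h2" shows "BS R (\<lambda>x. h1 x - h2 x)"
proof -
  obtain N1 N2 where N1: "\<And>x. \<bar>h1 x\<bar> \<le> N1" and N2: "\<And>x. \<bar>h2 x\<bar> \<le> N2" using assms by (auto simp: BS_def)
  have "\<bar>h1 x - h2 x\<bar> \<le> N1 + N2" for x
    using abs_triangle_ineq4[of "h1 x" "h2 x"] N1[of x] N2[of x] by linarith
  then show ?thesis using assms unfolding BS_def by auto
qed

lemma BS_sum:
  assumes "finite J" "\<And>j. j \<in> J \<Longrightarrow> BS R (h j)"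
  shows "BS R (\<lambda>x. \<Sum>j\<in>J. c j * h j x)"
  using assms
proof (induction J rule: finite_induct)
  case empty then show ?case using exI[of "\<lambda>N. (0::real) \<le> N" 0] by (simp add: BS_def)
next
  case (insert j J)
  have A: "BS R (h j)" "BS R (\<lambda>x. \<Sum>j\<in>J. c j * h j x)" using insert by auto
  obtain N1 N2 where N: "\<And>x. \<bar>h j x\<bar> \<le> N1" "\<And>x. \<bar>\<Sum>j\<in>J. c j * h j x\<bar> \<le> N2"
    using A by (auto simp: BS_def)
  have "\<bar>c j * h j x + (\<Sum>j\<in>J. c j * h j x)\<bar> \<le> \<bar>c j\<bar> * N1 + N2" for x
  proof -
    have "\<bar>c j * h j x\<bar> \<le> \<bar>c j\<bar> * N1" using N(1)[of x] by (simp add: abs_mult mult_left_mono)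
    then show ?thesis using N(2)[of x] abs_triangle_ineq[of "c j * h j x" "\<Sum>j\<in>J. c j * h j x"] by linarith
  qed
  then show ?case using A insert.hyps unfolding BS_def by auto
qed

lemma BS_ind:
  assumes "S \<in> sets lebesgue" "S \<subseteq> TT R"
  shows "BS R (indicator S)"
  unfolding BS_def using assms by (auto simp: indicator_def intro!: exI[of _ 1])

lemma sum_ind_cube:
  assumes "finite G"
  shows "(\<Sum>m\<in>G. indicator (dyadic_cube (int k) m) x) = (if idx (int k) x \<in> G then 1 else (0::real))"
proof -
  have "(\<Sum>m\<in>G. indicator (dyadic_cube (int k) m) x) = (\<Sum>m\<in>G. if idx (int k) x = m then 1 else (0::real))"
    by (rule sum.cong) (auto simp: indicator_def mem_cube_iff)
  also have "\<dots> = (if idx (int k) x \<in> G then 1 else 0)" using assms by (simp add: sum.delta)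
  finally show ?thesis .
qed

lemma Ek_integral:
  assumes h: "BS R h"
  shows "(\<integral>x. Ek k h x \<partial>lebesgue) = (\<integral>x. h x \<partial>lebesgue)"
proof -
  let ?G = "grid k R"
  have "(\<integral>x. Ek k h x \<partial>lebesgue) = (\<integral>x. (\<Sum>m\<in>?G. avg k h m * indicator (dyadic_cube (int k) m) x) \<partial>lebesgue)"
    using BS_rep[OF h, of "\<lambda>t. t"] by simp
  also have "\<dots> = (\<Sum>m\<in>?G. avg k h m * measure lebesgue (dyadic_cube (int k) m))"
    by (rule rep_integral[OF finite_grid])
  also have "\<dots> = (\<Sum>m\<in>?G. (\<integral>x. indicator (dyadic_cube (int k) m) x * h x \<partial>lebesgue))"
    by (simp add: avg_mult)
  also have "\<dots> = (\<integral>x. (\<Sum>m\<in>?G. indicator (dyadic_cube (int k) m) x * h x) \<partial>lebesgue)"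
    by (rule Bochner_Integration.integral_sum[symmetric]) (auto intro: BS_ind_int[OF h] cube_lebesgue)
  also have "\<dots> = (\<integral>x. h x \<partial>lebesgue)"
  proof (rule Bochner_Integration.integral_cong[OF refl])
    fix x
    have "(\<Sum>m\<in>?G. indicator (dyadic_cube (int k) m) x * h x) = (\<Sum>m\<in>?G. indicator (dyadic_cube (int k) m) x) * h x"
      by (simp add: sum_distrib_right)
    also have "\<dots> = h x"
      using sum_ind_cube[OF finite_grid[of k R], of k x] idx_grid[of x R k] h by (auto simp: BS_def)
    finally show "(\<Sum>m\<in>?G. indicator (dyadic_cube (int k) m) x * h x) = h x" .
  qed
  finally show ?thesis .
qed

lemma avg_abs_le: "BS R h \<Longrightarrow> \<bar>avg k h m\<bar> \<le> avg k (\<lambda>x. \<bar>h x\<bar>) m"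
proof -
  assume h: "BS R h"
  have "\<bar>\<integral>x. indicator (dyadic_cube (int k) m) x * h x \<partial>lebesgue\<bar> \<le> (\<integral>x. \<bar>indicator (dyadic_cube (int k) m) x * h x\<bar> \<partial>lebesgue)"
    by (rule integral_abs_bound)
  also have "\<dots> = (\<integral>x. indicator (dyadic_cube (int k) m) x * \<bar>h x\<bar> \<partial>lebesgue)"
    by (simp add: abs_mult)
  finally show ?thesis unfolding avg_def using cube_measure_pos[of "int k" m]
    by (simp add: abs_div divide_right_mono)
qed

lemma Ek_abs_integral:
  assumes h: "BS R h"
  shows "(\<integral>x. \<bar>Ek k h x\<bar> \<partial>lebesgue) \<le> (\<integral>x. \<bar>h x\<bar> \<partial>lebesgue)"
proof -
  have h': "BS R (\<lambda>x. \<bar>h x\<bar>)" by (rule BS_abs[OF h])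
  have i1: "integrable lebesgue (\<lambda>x. \<bar>Ek k h x\<bar>)"
    using BS_integrable[OF BS_Ek[OF h]] by (rule integrable_abs)
  have i2: "integrable lebesgue (\<lambda>x. Ek k (\<lambda>x. \<bar>h x\<bar>) x)"
    using BS_integrable[OF BS_Ek[OF h']] by simp
  have "(\<integral>x. \<bar>Ek k h x\<bar> \<partial>lebesgue) \<le> (\<integral>x. Ek k (\<lambda>x. \<bar>h x\<bar>) x \<partial>lebesgue)"
    by (rule integral_mono[OF i1 i2]) (simp add: Ek_def avg_abs_le[OF h])
  also have "\<dots> = (\<integral>x. \<bar>h x\<bar> \<partial>lebesgue)" by (rule Ek_integral[OF h'])
  finally show ?thesis .
qed

lemma Ek_diff:
  assumes "BS R h1" "BS R h2"
  shows "Ek k (\<lambda>x. h1 x - h2 x) x = Ek k h1 x - Ek k h2 x"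
proof -
  let ?Q = "dyadic_cube (int k) (idx (int k) x)"
  have "(\<integral>y. indicator ?Q y * (h1 y - h2 y) \<partial>lebesgue)
      = (\<integral>y. indicator ?Q y * h1 y \<partial>lebesgue) - (\<integral>y. indicator ?Q y * h2 y \<partial>lebesgue)"
    using BS_ind_int[OF assms(1) cube_lebesgue] BS_ind_int[OF assms(2) cube_lebesgue]
    by (simp add: right_diff_distrib)
  then show ?thesis unfolding Ek_def avg_def by (simp add: diff_divide_distrib)
qed

lemma avg_sum:
  assumes J: "finite J" and h: "\<And>j. j \<in> J \<Longrightarrow> BS R (h j)"
  shows "avg k (\<lambda>x. \<Sum>j\<in>J. c j * h j x) m = (\<Sum>j\<in>J. c j * avg k (h j) m)"
proof -
  let ?Q = "dyadic_cube (int k) m"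
  let ?mu = "measure lebesgue ?Q"
  have "(\<integral>y. indicator ?Q y * (\<Sum>j\<in>J. c j * h j y) \<partial>lebesgue)
      = (\<integral>y. (\<Sum>j\<in>J. c j * (indicator ?Q y * h j y)) \<partial>lebesgue)"
    by (simp add: sum_distrib_left algebra_simps)
  also have "\<dots> = (\<Sum>j\<in>J. c j * (\<integral>y. indicator ?Q y * h j y \<partial>lebesgue))"
    using BS_ind_int[OF h cube_lebesgue]
    by (subst Bochner_Integration.integral_sum) auto
  finally have e: "(\<integral>y. indicator ?Q y * (\<Sum>j\<in>J. c j * h j y) \<partial>lebesgue) = (\<Sum>j\<in>J. c j * (\<integral>y. indicator ?Q y * h j y \<partial>lebesgue))" .
  have "avg k (\<lambda>x. \<Sum>j\<in>J. c j * h j x) m = (\<Sum>j\<in>J. c j * (\<integral>y. indicator ?Q y * h j y \<partial>lebesgue)) / ?mu"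
    unfolding avg_def e ..
  also have "\<dots> = (\<Sum>j\<in>J. c j * (\<integral>y. indicator ?Q y * h j y \<partial>lebesgue) / ?mu)"
    by (rule sum_divide_distrib)
  also have "\<dots> = (\<Sum>j\<in>J. c j * avg k (h j) m)"
    unfolding avg_def by simp
  finally show ?thesis .
qed

lemma Ek_sum:
  assumes J: "finite J" and h: "\<And>j. j \<in> J \<Longrightarrow> BS R (h j)"
  shows "Ek k (\<lambda>x. \<Sum>j\<in>J. c j * h j x) x = (\<Sum>j\<in>J. c j * Ek k (h j) x)"
  unfolding Ek_def by (rule avg_sum[OF J h])

definition DD :: "nat \<Rightarrow> (real^'n::finite \<Rightarrow> real) \<Rightarrow> real" where
  "DD k h = (\<integral>x. \<bar>h x - Ek k h x\<bar> \<partial>lebesgue)"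

lemma BS_DD_integrable: "BS R h \<Longrightarrow> integrable lebesgue (\<lambda>x. \<bar>h x - Ek k h x\<bar>)"
  by (metis BS_diff BS_abs BS_integrable BS_Ek BS_mono le_add_same_cancel1 zero_le_one)



lemma open_lebesgue: "open (U :: (real^'n::finite) set) \<Longrightarrow> U \<in> sets lebesgue"
  by (rule sets_completionI_sets) (simp add: borel_open)

lemma avg_ind_bounds:
  assumes S: "S \<in> sets lebesgue"
  shows "0 \<le> avg k (indicator S) m" "avg k (indicator S) m \<le> 1"
proof -
  let ?Q = "dyadic_cube (int k) m"
  have mpos: "0 < measure lebesgue ?Q" by (rule cube_measure_pos)
  have i1: "integrable lebesgue (\<lambda>x. indicator ?Q x * indicator S x :: real)"
    using integrable_mult_indicator[OF S lmeas_ind_int[OF cube_lmeasurable[of "int k" m]]]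
    by (simp add: mult.commute)
  have "(0::real) \<le> (\<integral>x. indicator ?Q x * indicator S x \<partial>lebesgue)"
    by (rule integral_nonneg_AE) simp
  then show "0 \<le> avg k (indicator S) m" unfolding avg_def using mpos by simp
  have "(\<integral>x. indicator ?Q x * indicator S x \<partial>lebesgue) \<le> (\<integral>x. indicator ?Q x \<partial>lebesgue :: real)"
    by (rule integral_mono[OF i1 lmeas_ind_int[OF cube_lmeasurable]]) (simp add: indicator_def)
  also have "\<dots> = measure lebesgue ?Q" by (simp add: integral_indicator)
  finally show "avg k (indicator S) m \<le> 1" unfolding avg_def using mpos by simp
qed

lemma avg_ind_sub:
  assumes S: "S \<in> sets lebesgue" and sub: "dyadic_cube (int k) m \<subseteq> S"
  shows "avg k (indicator S) m = 1"
proof -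
  let ?Q = "dyadic_cube (int k) m"
  have mpos: "0 < measure lebesgue ?Q" by (rule cube_measure_pos)
  have "(\<lambda>x. indicator ?Q x * indicator S x :: real) = indicator ?Q"
    using sub by (auto simp: indicator_def fun_eq_iff)
  then have "(\<integral>x. indicator ?Q x * indicator S x \<partial>lebesgue) = measure lebesgue ?Q"
    by (simp add: integral_indicator)
  then show ?thesis unfolding avg_def using mpos by simp
qed

lemma eventually_small_cube:
  assumes "0 < r"
  shows "eventually (\<lambda>k. \<forall>x (y::real^'n::finite). y \<in> dyadic_cube (int k) (idx (int k) x) \<longrightarrow> dist x y < r) sequentially"
proof -
  have "(\<lambda>k. real CARD('n) * inverse (2 ^ k)) \<longlonglongrightarrow> real CARD('n) * 0"
    by (intro tendsto_mult tendsto_const LIMSEQ_inverse_realpow_zero) simp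
  then have "eventually (\<lambda>k. real CARD('n) * inverse (2 ^ k) < r) sequentially"
    using assms by (intro order_tendstoD(2)) auto
  then show ?thesis
  proof (rule eventually_mono, intro allI impI)
    fix k :: nat and x y :: "real^'n"
    assume k: "real CARD('n) * inverse (2 ^ k) < r" and y: "y \<in> dyadic_cube (int k) (idx (int k) x)"
    have x: "x \<in> dyadic_cube (int k) (idx (int k) x)" by (simp add: mem_cube_iff)
    have s: "2 powr (- real_of_int (int k)) = inverse (2 ^ k)"
      by (simp add: powr_minus powr_realpow)
    have "dist x y = norm (x - y)" by (simp add: dist_norm)
    also have "\<dots> \<le> (\<Sum>i\<in>UNIV. \<bar>(x - y) $ i\<bar>)" by (rule norm_le_l1_cart)
    also have "\<dots> < (\<Sum>i\<in>(UNIV::'n set). inverse (2 ^ k))"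
      using cube_diam[OF x y] s by (intro strict_ordered_comm_monoid_add_class.sum_strict_mono) auto
    also have "\<dots> = real CARD('n) * inverse (2 ^ k)" by simp
    finally show "dist x y < r" using k by simp
  qed
qed

lemma DD_open:
  fixes U :: "(real^'n::finite) set"
  assumes Uo: "open U" and UT: "U \<subseteq> TT R" and e: "0 < \<epsilon>"
  shows "eventually (\<lambda>k. DD k (indicator U) < \<epsilon>) sequentially"
proof -
  have Us: "U \<in> sets lebesgue" by (rule open_lebesgue[OF Uo])
  have Ul: "U \<in> lmeasurable" by (rule fmeasurableI2[OF TT_lmeas UT Us])
  have hU: "BS R (indicator U)" by (rule BS_ind[OF Us UT])
  define e where "e k x = Ek k (indicator U) x" for k x
  have e01: "\<And>k x. 0 \<le> e k x \<and> e k x \<le> 1" unfolding e_def Ek_def using avg_ind_bounds[OF Us] by auto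
  have eint: "\<And>k. integrable lebesgue (e k)" unfolding e_def using BS_integrable[OF BS_Ek[OF hU]] .
  have emeas: "\<And>k. e k \<in> borel_measurable lebesgue" using eint by (rule borel_measurable_integrable)
  have iU: "integrable lebesgue (indicator U :: _ \<Rightarrow> real)" by (rule lmeas_ind_int[OF Ul])
  have iUe: "\<And>k. integrable lebesgue (\<lambda>x. indicator U x * e k x)"
    using integrable_mult_indicator[OF Us eint] by simp
  have inte: "\<And>k. (\<integral>x. e k x \<partial>lebesgue) = measure lebesgue U"
    unfolding e_def using Ek_integral[OF hU] by (simp add: integral_indicator)
  define I where "I k = (\<integral>x. indicator U x * (1 - e k x) \<partial>lebesgue)" for k
  have DDeq: "DD k (indicator U) = 2 * I k" for k
  proof -
    have pw: "\<bar>indicator U x - e k x\<bar> = indicator U x + e k x - 2 * (indicator U x * e k x)" for x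
      using e01[of k x] by (auto simp: indicator_def)
    have "DD k (indicator U) = (\<integral>x. indicator U x + e k x - 2 * (indicator U x * e k x) \<partial>lebesgue)"
      unfolding DD_def e_def[symmetric] pw ..
    also have "\<dots> = measure lebesgue U + measure lebesgue U - 2 * (\<integral>x. indicator U x * e k x \<partial>lebesgue)"
      using iU eint iUe inte by (simp add: integral_indicator)
    also have "I k = measure lebesgue U - (\<integral>x. indicator U x * e k x \<partial>lebesgue)"
      unfolding I_def using iU iUe by (simp add: right_diff_distrib integral_indicator)
    ultimately show ?thesis by simp
  qed
  have "I \<longlonglongrightarrow> (\<integral>x. 0 \<partial>(lebesgue :: (real^'n) measure))"
    unfolding I_def
  proof (rule integral_dominated_convergence[where f = "\<lambda>x. 0" and s = "\<lambda>k x. indicator U x * (1 - e k x)" and w = "indicator U"])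
    show "(\<lambda>x. 0::real) \<in> borel_measurable lebesgue" by simp
    show "\<And>k. (\<lambda>x. indicator U x * (1 - e k x)) \<in> borel_measurable lebesgue"
      using emeas Us by measurable
    show "integrable lebesgue (indicator U :: _ \<Rightarrow> real)" by (rule iU)
    show "\<And>k. AE x in lebesgue. norm (indicator U x * (1 - e k x)) \<le> indicator U x"
      using e01 by (auto simp: indicator_def)
    show "AE x in lebesgue. (\<lambda>k. indicator U x * (1 - e k x)) \<longlonglongrightarrow> 0"
    proof (rule AE_I2)
      fix x
      show "(\<lambda>k. indicator U x * (1 - e k x)) \<longlonglongrightarrow> 0"
      proof (cases "x \<in> U")
        case False then show ?thesis by simp
      next
        case True
        then obtain r where r: "0 < r" "ball x r \<subseteq> U" using Uo open_contains_ball by blast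
        have "eventually (\<lambda>k. indicator U x * (1 - e k x) = 0) sequentially"
          using eventually_small_cube[OF r(1)]
        proof (rule eventually_mono)
          fix k assume k: "\<forall>x (y::real^'n). y \<in> dyadic_cube (int k) (idx (int k) x) \<longrightarrow> dist x y < r"
          have "dyadic_cube (int k) (idx (int k) x) \<subseteq> U" using k r(2) by (auto simp: subset_eq)
          then have "e k x = 1" unfolding e_def Ek_def by (rule avg_ind_sub[OF Us])
          then show "indicator U x * (1 - e k x) = 0" by simp
        qed
        then show ?thesis by (rule tendsto_eventually)
      qed
    qed
  qed
  then have "(\<lambda>k. DD k (indicator U)) \<longlonglongrightarrow> 2 * 0"
    unfolding DDeq by (intro tendsto_mult tendsto_const) simp
  then show ?thesis using e by (intro order_tendstoD(2)) auto
qed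



lemma DD_triangle:
  assumes h: "BS R h" and s: "BS R s"
  shows "DD k h \<le> 2 * (\<integral>x. \<bar>h x - s x\<bar> \<partial>lebesgue) + DD k s"
proof -
  have hs: "BS R (\<lambda>x. s x - h x)" by (rule BS_diff[OF s h])
  have i1: "integrable lebesgue (\<lambda>x. \<bar>h x - s x\<bar>)" using BS_integrable[OF BS_abs[OF BS_diff[OF h s]]] .
  have i2: "integrable lebesgue (\<lambda>x. \<bar>s x - Ek k s x\<bar>)" by (rule BS_DD_integrable[OF s])
  have i3: "integrable lebesgue (\<lambda>x. \<bar>Ek k (\<lambda>x. s x - h x) x\<bar>)"
    using BS_integrable[OF BS_abs[OF BS_Ek[OF hs]]] .
  have pw: "\<bar>h x - Ek k h x\<bar> \<le> \<bar>h x - s x\<bar> + \<bar>s x - Ek k s x\<bar> + \<bar>Ek k (\<lambda>x. s x - h x) x\<bar>" for x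
    using Ek_diff[OF s h, of k x] by linarith
  have "DD k h \<le> (\<integral>x. \<bar>h x - s x\<bar> + \<bar>s x - Ek k s x\<bar> + \<bar>Ek k (\<lambda>x. s x - h x) x\<bar> \<partial>lebesgue)"
    unfolding DD_def using BS_DD_integrable[OF h] i1 i2 i3 pw by (intro integral_mono) auto
  also have "\<dots> = (\<integral>x. \<bar>h x - s x\<bar> \<partial>lebesgue) + DD k s + (\<integral>x. \<bar>Ek k (\<lambda>x. s x - h x) x\<bar> \<partial>lebesgue)"
    unfolding DD_def using i1 i2 i3 by simp
  also have "(\<integral>x. \<bar>Ek k (\<lambda>x. s x - h x) x\<bar> \<partial>lebesgue) \<le> (\<integral>x. \<bar>s x - h x\<bar> \<partial>lebesgue)"
    by (rule Ek_abs_integral[OF hs])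
  also have "(\<integral>x. \<bar>s x - h x\<bar> \<partial>lebesgue) = (\<integral>x. \<bar>h x - s x\<bar> \<partial>lebesgue)"
    by (simp add: abs_minus_commute)
  finally show ?thesis by simp
qed

lemma DD_meas:
  fixes A :: "(real^'n::finite) set"
  assumes A: "A \<in> sets lebesgue" "A \<subseteq> TT R" and e: "0 < \<epsilon>"
  shows "eventually (\<lambda>k. DD k (indicator A) < \<epsilon>) sequentially"
proof -
  obtain U where U: "open U" "A \<subseteq> U" "(U - A) \<in> lmeasurable" "emeasure lebesgue (U - A) < ennreal (\<epsilon>/4)"
    using sets_lebesgue_outer_open[OF A(1), of "\<epsilon>/4"] e by auto
  define W where "W = box (- (\<chi> i. R + 1)) (\<chi> i::'n. R + 1)"
  define U' where "U' = U \<inter> W"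
  have oU': "open U'" unfolding U'_def W_def using U(1) by auto
  have TW: "TT R \<subseteq> W"
  proof
    fix x :: "real^'n" assume "x \<in> TT R"
    then have "\<And>i. \<bar>x$i\<bar> \<le> R" by (simp add: TT_def)
    then have "\<And>i. - (R + 1) < x$i \<and> x$i < R + 1" by (smt (verit, best))
    then show "x \<in> W" unfolding W_def by (simp add: mem_box_cart)
  qed
  have AU': "A \<subseteq> U'" unfolding U'_def using U(2) A(2) TW by auto
  have U'T: "U' \<subseteq> TT (R + 1)"
  proof
    fix x :: "real^'n" assume "x \<in> U'"
    then have "x \<in> W" by (simp add: U'_def)
    then have "\<And>i. - (R + 1) < x$i \<and> x$i < R + 1" unfolding W_def by (simp add: mem_box_cart)
    then have "\<And>i. \<bar>x$i\<bar> \<le> R + 1" by (smt (verit, best))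
    then show "x \<in> TT (R + 1)" by (simp add: TT_def)
  qed
  have U's: "U' \<in> sets lebesgue" by (rule open_lebesgue[OF oU'])
  have hA: "BS (R + 1) (indicator A)" using A TT_mono[of R "R + 1"] by (intro BS_ind) auto
  have hU: "BS (R + 1) (indicator U')" by (rule BS_ind[OF U's U'T])
  have UAl: "U' - A \<in> lmeasurable" by (rule fmeasurableI2[OF U(3)]) (use A(1) U's in \<open>auto simp: U'_def\<close>)
  have "measure lebesgue (U' - A) \<le> measure lebesgue (U - A)"
    by (rule measure_mono_fmeasurable[OF _ _ U(3)]) (use UAl in \<open>auto simp: U'_def fmeasurable_def\<close>)
  moreover have "measure lebesgue (U - A) < \<epsilon>/4"
    using U(4) emeasure_eq_measure2[OF U(3)] e by (simp add: ennreal_less_iff)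
  ultimately have small: "measure lebesgue (U' - A) < \<epsilon>/4" by simp
  have "(\<lambda>x. \<bar>indicator A x - indicator U' x\<bar>) = (indicator (U' - A) :: _ \<Rightarrow> real)"
    using AU' by (auto simp: indicator_def fun_eq_iff)
  then have d: "(\<integral>x. \<bar>indicator A x - indicator U' x\<bar> \<partial>lebesgue) = measure lebesgue (U' - A)"
    by (simp add: integral_indicator)
  have "eventually (\<lambda>k. DD k (indicator U') < \<epsilon>/2) sequentially"
    using DD_open[OF oU' U'T, of "\<epsilon>/2"] e by simp
  then show ?thesis
  proof (rule eventually_mono)
    fix k assume k: "DD k (indicator U') < \<epsilon>/2"
    have "DD k (indicator A) \<le> 2 * (\<integral>x. \<bar>indicator A x - indicator U' x\<bar> \<partial>lebesgue) + DD k (indicator U')"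
      by (rule DD_triangle[OF hA hU])
    then show "DD k (indicator A) < \<epsilon>" using d small k by simp
  qed
qed

lemma DD_simple:
  fixes B :: "'j \<Rightarrow> (real^'n::finite) set"
  assumes J: "finite J" and B: "\<And>j. j \<in> J \<Longrightarrow> B j \<in> sets lebesgue \<and> B j \<subseteq> TT R" and e: "0 < \<epsilon>"
  shows "eventually (\<lambda>k. DD k (\<lambda>x. \<Sum>j\<in>J. c j * indicator (B j) x) < \<epsilon>) sequentially"
proof -
  define C where "C = (\<Sum>j\<in>J. \<bar>c j\<bar>) + 1"
  have C0: "0 < C" unfolding C_def by (simp add: add_nonneg_pos sum_nonneg)
  have hB: "\<And>j. j \<in> J \<Longrightarrow> BS R (indicator (B j))" using B by (intro BS_ind) auto
  have "eventually (\<lambda>k. \<forall>j\<in>J. DD k (indicator (B j)) < \<epsilon> / C) sequentially"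
    using J B e C0 by (intro eventually_ball_finite ballI DD_meas) auto
  then show ?thesis
  proof (rule eventually_mono)
    fix k assume k: "\<forall>j\<in>J. DD k (indicator (B j)) < \<epsilon> / C"
    let ?s = "\<lambda>x. \<Sum>j\<in>J. c j * indicator (B j) x"
    have pw: "\<bar>?s x - Ek k ?s x\<bar> \<le> (\<Sum>j\<in>J. \<bar>c j\<bar> * \<bar>indicator (B j) x - Ek k (indicator (B j)) x\<bar>)" for x
    proof -
      have "?s x - Ek k ?s x = (\<Sum>j\<in>J. c j * (indicator (B j) x - Ek k (indicator (B j)) x))"
        using Ek_sum[OF J hB, where k=k and c=c and x=x] by (simp add: sum_subtractf right_diff_distrib)
      also have "\<bar>\<dots>\<bar> \<le> (\<Sum>j\<in>J. \<bar>c j * (indicator (B j) x - Ek k (indicator (B j)) x)\<bar>)"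
        by (rule sum_abs)
      finally show ?thesis by (simp add: abs_mult)
    qed
    have "DD k ?s \<le> (\<integral>x. (\<Sum>j\<in>J. \<bar>c j\<bar> * \<bar>indicator (B j) x - Ek k (indicator (B j)) x\<bar>) \<partial>lebesgue)"
      unfolding DD_def using pw BS_DD_integrable[OF BS_sum[OF J hB]] BS_DD_integrable[OF hB]
      by (intro integral_mono Bochner_Integration.integrable_sum integrable_mult_right) auto
    also have "\<dots> = (\<Sum>j\<in>J. \<bar>c j\<bar> * DD k (indicator (B j)))"
      unfolding DD_def using BS_DD_integrable[OF hB]
      by (subst Bochner_Integration.integral_sum) auto
    also have "\<dots> \<le> (\<Sum>j\<in>J. \<bar>c j\<bar> * (\<epsilon> / C))"
      using k by (intro sum_mono mult_left_mono) auto
    also have "\<dots> = (\<Sum>j\<in>J. \<bar>c j\<bar>) * (\<epsilon> / C)" by (rule sum_distrib_right[symmetric])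
    also have "\<dots> = (C - 1) * (\<epsilon> / C)" by (simp add: C_def)
    also have "\<dots> < \<epsilon>" using C0 e by (simp add: field_simps)
    finally show "DD k ?s < \<epsilon>" .
  qed
qed



lemma DD_bounded:
  fixes g :: "real^'n::finite \<Rightarrow> real"
  assumes g: "BS R g" and gb: "\<And>x. 0 \<le> g x \<and> g x \<le> N" and N: "0 < N" and e: "0 < \<epsilon>"
  shows "\<exists>k. DD k g < \<epsilon>"
proof -
  obtain L :: nat where L: "4 * N * measure lebesgue (TT R :: (real^'n) set) / \<epsilon> < real L"
    using reals_Archimedean2 by blast
  have mT: "0 \<le> measure lebesgue (TT R :: (real^'n) set)" by simp
  have Lpos: "0 < real L" using L N e mT by (smt (verit) divide_nonneg_pos mult_nonneg_nonneg)
  define Lr where "Lr = real L"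
  have Lr: "0 < Lr" using Lpos by (simp add: Lr_def)
  define B where "B j = {x \<in> TT R. real_of_int j \<le> g x * Lr / N \<and> g x * Lr / N < real_of_int j + 1}" for j :: int
  define c where "c j = real_of_int j * N / Lr" for j :: int
  define J where "J = {0..int L}"
  define s where "s x = (\<Sum>j\<in>J. c j * indicator (B j) x)" for x
  have gm: "g \<in> borel_measurable lebesgue" using g by (simp add: BS_def)
  have TTs: "(TT R :: (real^'n) set) \<in> sets lebesgue" by (rule fmeasurableD[OF TT_lmeas])
  have Bs: "\<And>j. B j \<in> sets lebesgue \<and> B j \<subseteq> TT R"
  proof
    fix j
    have "B j = TT R \<inter> {x \<in> space lebesgue. real_of_int j \<le> g x * Lr / N \<and> g x * Lr / N < real_of_int j + 1}"
      by (auto simp: B_def)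
    also have "\<dots> \<in> sets lebesgue" using TTs gm by measurable
    finally show "B j \<in> sets lebesgue" .
    show "B j \<subseteq> TT R" by (auto simp: B_def)
  qed
  have sx: "\<bar>g x - s x\<bar> \<le> N / Lr * indicator (TT R) x" for x
  proof (cases "x \<in> TT R")
    case True
    let ?t = "g x * Lr / N"
    let ?j = "\<lfloor>?t\<rfloor>"
    have t0: "0 \<le> ?t" using gb[of x] N Lr by simp
    have tL: "?t \<le> Lr" using gb[of x] N Lr by (simp add: divide_le_eq mult.commute mult_right_mono)
    have jJ: "?j \<in> J"
    proof -
      have "0 \<le> ?j" using t0 by simp
      moreover have "?j \<le> \<lfloor>Lr\<rfloor>" using tL by (rule floor_mono)
      moreover have "\<lfloor>Lr\<rfloor> = int L" by (simp add: Lr_def)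
      ultimately show ?thesis by (simp add: J_def)
    qed
    have ind: "\<And>j. indicator (B j) x = (if j = ?j then 1 else (0::real))"
      using True by (auto simp: B_def indicator_def floor_eq_iff) (metis floor_unique)
    have "s x = (\<Sum>j\<in>J. if j = ?j then c j else 0)"
      unfolding s_def by (rule sum.cong) (auto simp: ind)
    also have "\<dots> = c ?j" using jJ unfolding J_def by (subst sum.delta) auto
    finally have sxe: "s x = c ?j" .
    have eq: "g x - c ?j = N / Lr * (?t - real_of_int ?j)" using N Lr by (simp add: c_def field_simps)
    have d0: "0 \<le> ?t - real_of_int ?j" and d1: "?t - real_of_int ?j \<le> 1" by linarith+
    have nl: "0 \<le> N / Lr" using N Lr by simp
    have "N / Lr * (?t - real_of_int ?j) \<le> N / Lr * 1" by (rule mult_left_mono[OF d1 nl])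
    moreover have "0 \<le> N / Lr * (?t - real_of_int ?j)" by (rule mult_nonneg_nonneg[OF nl d0])
    ultimately have "0 \<le> g x - c ?j" "g x - c ?j \<le> N / Lr" unfolding eq by simp_all
    then show ?thesis using sxe True by simp
  next
    case False
    then have "g x = 0" using g by (simp add: BS_def)
    moreover have "s x = 0" unfolding s_def using False Bs by (intro sum.neutral) (auto simp: indicator_def)
    ultimately show ?thesis using False by simp
  qed
  have hJ: "\<And>j. j \<in> J \<Longrightarrow> BS R (indicator (B j))" using Bs by (intro BS_ind) auto
  have sBS: "BS R s" unfolding s_def by (rule BS_sum[OF _ hJ]) (simp add: J_def)
  have int1: "(\<integral>x. \<bar>g x - s x\<bar> \<partial>lebesgue) \<le> N / Lr * measure lebesgue (TT R :: (real^'n) set)"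
  proof -
    have "(\<integral>x. \<bar>g x - s x\<bar> \<partial>lebesgue) \<le> (\<integral>x. N / Lr * indicator (TT R :: (real^'n) set) x \<partial>lebesgue)"
      using BS_integrable[OF BS_abs[OF BS_diff[OF g sBS]]] sx
      by (intro integral_mono integrable_mult_right lmeas_ind_int TT_lmeas) auto
    also have "\<dots> = N / Lr * measure lebesgue (TT R :: (real^'n) set)" by (simp add: integral_indicator)
    finally show ?thesis .
  qed
  have small: "2 * (N / Lr * measure lebesgue (TT R :: (real^'n) set)) < \<epsilon> / 2"
  proof -
    have "4 * N * measure lebesgue (TT R :: (real^'n) set) < \<epsilon> * Lr"
      using L e by (simp add: Lr_def divide_less_eq mult.commute)
    then show ?thesis using Lr by (simp add: field_simps)
  qed
  have "eventually (\<lambda>k. DD k s < \<epsilon> / 2) sequentially"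
    unfolding s_def using Bs e by (intro DD_simple) (auto simp: J_def)
  then obtain k where k: "DD k s < \<epsilon> / 2" by (auto simp: eventually_sequentially)
  have "DD k g \<le> 2 * (\<integral>x. \<bar>g x - s x\<bar> \<partial>lebesgue) + DD k s" by (rule DD_triangle[OF g sBS])
  then have "DD k g < \<epsilon>" using int1 small k by linarith
  then show ?thesis by blast
qed

lemma loc_int_cube:
  fixes f :: "real^'n::finite \<Rightarrow> real"
  assumes f: "loc_integrable f"
  shows "integrable lebesgue (\<lambda>x. indicator (dyadic_cube k m) x * \<bar>f x\<bar>)"
proof -
  have "set_integrable lebesgue (cbox (lo k m) (hi k m)) f"
    using f by (simp add: loc_integrable_def)
  then have "set_integrable lebesgue (dyadic_cube k m) f"
    by (rule set_integrable_subset) (auto simp: cube_lebesgue cube_sub_cbox)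
  then have "set_integrable lebesgue (dyadic_cube k m) (\<lambda>x. \<bar>f x\<bar>)"
    by (rule set_integrable_abs)
  then show ?thesis by (simp add: set_integrable_def)
qed

definition tm :: "real \<Rightarrow> (real^'n::finite \<Rightarrow> real) \<Rightarrow> (real^'n) set \<Rightarrow> real" where
  "tm p f Q = (measure lebesgue Q powr (- 1 / dual_exp p) * (LINT x:Q|lebesgue. \<bar>f x\<bar>)) powr p"

lemma grid_sum_bound:
  fixes f :: "real^'n::finite \<Rightarrow> real" and F :: "('n \<Rightarrow> int) set"
  assumes F: "finite F" and B: "\<And>Q I. sparse Q I \<Longrightarrow> sr_sum p f Q I \<le> ennreal B" and B0: "0 \<le> B"
  shows "(\<Sum>m\<in>F. tm p f (dyadic_cube k m)) \<le> B"
proof -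
  obtain h where h: "bij_betw h {0..<card F} F" using ex_bij_betw_nat_finite[OF F] by blast
  define Q where "Q i = dyadic_cube k (h i)" for i
  define I where "I = {0..<card F}"
  have sp: "sparse Q I"
    unfolding sparse_def
  proof (intro conjI exI[of _ Q] ballI)
    fix i assume "i \<in> I"
    show "Q i \<in> dyadic_cubes" unfolding Q_def dyadic_cubes_def by blast
    show "Q i \<in> sets lebesgue" unfolding Q_def by (rule cube_lebesgue)
    show "Q i \<subseteq> Q i" by simp
    show "1/2 * measure lebesgue (Q i) \<le> measure lebesgue (Q i)" by simp
  next
    show "disjoint_family_on Q I"
      unfolding disjoint_family_on_def Q_def I_def
      using h by (auto simp: bij_betw_def inj_on_def intro!: cube_disjoint)
  qed
  have "sr_sum p f Q I = (\<Sum>i\<in>I. ennreal (tm p f (Q i)))"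
    unfolding sr_sum_def tm_def by (subst suminf_finite[of I]) (auto simp: I_def)
  also have "\<dots> = ennreal (\<Sum>i\<in>I. tm p f (Q i))" by (rule sum_ennreal) (simp add: tm_def)
  also have "(\<Sum>i\<in>I. tm p f (Q i)) = (\<Sum>m\<in>F. tm p f (dyadic_cube k m))"
    unfolding I_def Q_def by (rule sum.reindex_bij_betw[OF h])
  finally have "ennreal (\<Sum>m\<in>F. tm p f (dyadic_cube k m)) \<le> ennreal B" using B[OF sp] by simp
  then show ?thesis using B0 by (simp add: ennreal_le_iff)
qed



lemma Ek_nonneg: "(\<And>x. 0 \<le> g x) \<Longrightarrow> 0 \<le> Ek k g x"
  unfolding Ek_def avg_def
  by (intro divide_nonneg_nonneg integral_nonneg_AE) auto

lemma SR_bound_BS: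
  fixes f g :: "real^'n::finite \<Rightarrow> real"
  assumes p: "1 < p" and f: "loc_integrable f"
    and B: "\<And>Q I. sparse Q I \<Longrightarrow> sr_sum p f Q I \<le> ennreal B" and B0: "0 \<le> B"
    and g: "BS R g" and gf: "\<And>x. 0 \<le> g x \<and> g x \<le> \<bar>f x\<bar>" and gN: "\<And>x. g x \<le> N" and N: "0 < N"
  shows "(\<integral>x. g x powr p \<partial>lebesgue) \<le> B"
proof -
  have gm: "g \<in> borel_measurable lebesgue" using g by (simp add: BS_def)
  have g0: "\<And>x. 0 \<le> g x" using gf by blast
  have gp: "BS R (\<lambda>x. g x powr p)"
  proof -
    have "(\<lambda>x. g x powr p) \<in> borel_measurable lebesgue" using gm by measurable
    moreover have "\<bar>g x powr p\<bar> \<le> N powr p" for x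
      using g0[of x] gN[of x] p by (simp add: powr_mono2)
    moreover have "g x powr p = 0" if "x \<notin> TT R" for x using g that by (simp add: BS_def)
    ultimately show ?thesis unfolding BS_def by blast
  qed
  have rep: "\<And>k x. Ek k g x powr p = (\<Sum>m\<in>grid k R. avg k g m powr p * indicator (dyadic_cube (int k) m) x)"
    using BS_rep[OF g, of "\<lambda>t. t powr p"] by simp
  have repf: "\<And>k. (\<lambda>x. Ek k g x powr p) = (\<lambda>x. \<Sum>m\<in>grid k R. avg k g m powr p * indicator (dyadic_cube (int k) m) x)"
    using rep by (intro ext) simp
  have Epint: "\<And>k. integrable lebesgue (\<lambda>x. Ek k g x powr p)"
    unfolding repf by (rule rep_integrable[OF finite_grid])
  have a: "(\<integral>x. Ek k g x powr p \<partial>lebesgue) \<le> B" for k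
  proof -
    let ?G = "grid k R"
    have "(\<integral>x. Ek k g x powr p \<partial>lebesgue) = (\<Sum>m\<in>?G. avg k g m powr p * measure lebesgue (dyadic_cube (int k) m))"
      unfolding repf by (rule rep_integral[OF finite_grid])
    also have "\<dots> \<le> (\<Sum>m\<in>?G. tm p f (dyadic_cube (int k) m))"
    proof (rule sum_mono)
      fix m :: "'n \<Rightarrow> int"
      let ?Q = "dyadic_cube (int k) m"
      let ?mu = "measure lebesgue ?Q"
      let ?s = "LINT x:?Q|lebesgue. \<bar>f x\<bar>"
      have mu: "0 < ?mu" by (rule cube_measure_pos)
      have sint: "?s = (\<integral>x. indicator ?Q x * \<bar>f x\<bar> \<partial>lebesgue)" by (simp add: set_lebesgue_integral_def)
      have s0: "0 \<le> ?s" unfolding sint by (rule integral_nonneg_AE) simp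
      have le: "(\<integral>x. indicator ?Q x * g x \<partial>lebesgue) \<le> (\<integral>x. indicator ?Q x * \<bar>f x\<bar> \<partial>lebesgue)"
        using gf by (intro integral_mono BS_ind_int[OF g cube_lebesgue] loc_int_cube[OF f])
          (simp add: indicator_def)
      have a0: "0 \<le> avg k g m" unfolding avg_def
        by (intro divide_nonneg_nonneg integral_nonneg_AE) (auto simp: g0)
      have "avg k g m \<le> ?s / ?mu" unfolding avg_def sint using le mu by (simp add: divide_right_mono)
      then have "avg k g m powr p \<le> (?s / ?mu) powr p" using a0 p by (intro powr_mono2) auto
      then have "avg k g m powr p * ?mu \<le> (?s / ?mu) powr p * ?mu" using mu by (simp add: mult_right_mono)
      also have "\<dots> = tm p f ?Q" unfolding tm_def using term_eq[OF p mu s0] by simp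
      finally show "avg k g m powr p * ?mu \<le> tm p f ?Q" .
    qed
    also have "\<dots> \<le> B" by (rule grid_sum_bound[OF finite_grid B B0])
    finally show ?thesis .
  qed
  define C where "C = p * N powr (p - 1)"
  have C0: "0 < C" using p N by (simp add: C_def)
  have b: "(\<integral>x. g x powr p \<partial>lebesgue) \<le> (\<integral>x. Ek k g x powr p \<partial>lebesgue) + C * DD k g" for k
  proof -
    have pw: "g x powr p \<le> Ek k g x powr p + C * \<bar>g x - Ek k g x\<bar>" for x
    proof -
      have e0: "0 \<le> Ek k g x" by (rule Ek_nonneg[OF g0])
      have "g x powr p \<le> Ek k g x powr p + p * g x powr (p - 1) * (g x - Ek k g x)"
        by (rule tangent_ineq[OF p g0 e0])
      also have "p * g x powr (p - 1) * (g x - Ek k g x) \<le> C * \<bar>g x - Ek k g x\<bar>"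
      proof -
        have "g x powr (p - 1) \<le> N powr (p - 1)" using g0[of x] gN[of x] p by (intro powr_mono2) auto
        then have "p * g x powr (p - 1) \<le> C" using p by (simp add: C_def)
        moreover have "0 \<le> p * g x powr (p - 1)" using p by simp
        ultimately have "p * g x powr (p - 1) * (g x - Ek k g x) \<le> p * g x powr (p - 1) * \<bar>g x - Ek k g x\<bar>"
          by (intro mult_left_mono) auto
        also have "\<dots> \<le> C * \<bar>g x - Ek k g x\<bar>"
          using \<open>p * g x powr (p - 1) \<le> C\<close> by (intro mult_right_mono) auto
        finally show ?thesis .
      qed
      finally show ?thesis by simp
    qed
    have "(\<integral>x. g x powr p \<partial>lebesgue) \<le> (\<integral>x. Ek k g x powr p + C * \<bar>g x - Ek k g x\<bar> \<partial>lebesgue)"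
      using BS_integrable[OF gp] Epint BS_DD_integrable[OF g] pw
      by (intro integral_mono Bochner_Integration.integrable_add integrable_mult_right) auto
    also have "\<dots> = (\<integral>x. Ek k g x powr p \<partial>lebesgue) + C * DD k g"
      unfolding DD_def using Epint BS_DD_integrable[OF g] by simp
    finally show ?thesis .
  qed
  show ?thesis
  proof (rule field_le_epsilon)
    fix e :: real assume e: "0 < e"
    obtain k where k: "DD k g < e / C"
      using DD_bounded[OF g _ N, of "e / C"] gf gN e C0 by (auto intro: divide_pos_pos)
    have "(\<integral>x. g x powr p \<partial>lebesgue) \<le> B + C * DD k g" using a[of k] b[of k] by simp
    also have "C * DD k g \<le> C * (e / C)" using k C0 by (intro mult_left_mono) auto
    also have "C * (e / C) = e" using C0 by simp
    finally show "(\<integral>x. g x powr p \<partial>lebesgue) \<le> B + e" by simp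
  qed
qed



lemma loc_int_measurable:
  fixes f :: "real^'n::finite \<Rightarrow> real"
  assumes f: "loc_integrable f"
  shows "f \<in> borel_measurable lebesgue"
proof (rule borel_measurable_LIMSEQ_real[where u = "\<lambda>n x. indicator (TT (real n)) x * f x"])
  fix n :: nat
  have "compact (TT (real n) :: (real^'n) set)" by (rule TT_compact)
  then have "set_integrable lebesgue (TT (real n)) f" using f unfolding loc_integrable_def by blast
  then show "(\<lambda>x. indicator (TT (real n)) x * f x) \<in> borel_measurable lebesgue"
    unfolding set_integrable_def by (simp add: borel_measurable_integrable)
next
  fix x :: "real^'n"
  obtain n0 :: nat where n0: "norm x \<le> real n0" using real_arch_simple by blast
  have "eventually (\<lambda>n. indicator (TT (real n)) x * f x = f x) sequentially"
    unfolding eventually_sequentially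
  proof (intro exI allI impI)
    fix n assume "n0 \<le> n"
    then have "norm x \<le> real n" using n0 by linarith
    then have "x \<in> TT (real n)" unfolding TT_def using component_le_norm_cart order_trans by blast
    then show "indicator (TT (real n)) x * f x = f x" by simp
  qed
  then show "(\<lambda>n. indicator (TT (real n)) x * f x) \<longlonglongrightarrow> f x" by (rule tendsto_eventually)
qed

lemma SR_sub_Lp:
  fixes f :: "real^'n::finite \<Rightarrow> real"
  assumes p: "1 < p" and f: "f \<in> SR_pp p"
  shows "f \<in> Lp p"
proof -
  have fl: "loc_integrable f" and fn: "sr_norm_p p f < \<infinity>" using f by (auto simp: SR_pp_def)
  define B where "B = enn2real (sr_norm_p p f)"
  have B0: "0 \<le> B" by (simp add: B_def)
  have BB: "sr_norm_p p f = ennreal B" unfolding B_def using fn by (simp add: ennreal_enn2real)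
  have Bsp: "sr_sum p f Q I \<le> ennreal B" if "sparse Q I" for Q I
  proof -
    have "sr_sum p f Q I \<le> sr_norm_p p f"
      unfolding sr_norm_p_def
      using SUP_upper[of "(Q, I)" "{(Q, I). sparse Q I}" "\<lambda>(Q, I). sr_sum p f Q I"] that by simp
    then show ?thesis using BB by simp
  qed
  have fm: "f \<in> borel_measurable lebesgue" by (rule loc_int_measurable[OF fl])
  define gn where "gn n x = indicator (TT (real n)) x * min \<bar>f x\<bar> (real n)" for n x
  have TTs: "\<And>R. (TT R :: (real^'n) set) \<in> sets lebesgue" by (rule fmeasurableD[OF TT_lmeas])
  have gBS: "BS (real n) (gn n)" for n
  proof -
    have "gn n \<in> borel_measurable lebesgue" unfolding gn_def using fm TTs by measurable
    moreover have "\<bar>gn n x\<bar> \<le> real n" for x by (simp add: gn_def indicator_def)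
    moreover have "gn n x = 0" if "x \<notin> TT (real n)" for x using that by (simp add: gn_def)
    ultimately show ?thesis unfolding BS_def by blast
  qed
  have gf: "0 \<le> gn n x \<and> gn n x \<le> \<bar>f x\<bar>" for n x by (simp add: gn_def indicator_def)
  have gN: "gn n x \<le> real n + 1" for n x by (auto simp: gn_def indicator_def min_def)
  have gint: "(\<integral>x. gn n x powr p \<partial>lebesgue) \<le> B" for n
    by (rule SR_bound_BS[OF p fl Bsp B0 gBS gf gN]) auto
  have gpint: "integrable lebesgue (\<lambda>x. gn n x powr p)" for n
  proof -
    have "BS (real n) (\<lambda>x. gn n x powr p)"
    proof -
      have gm: "gn n \<in> borel_measurable lebesgue" using gBS[of n] by (simp add: BS_def)
      have "(\<lambda>x. gn n x powr p) \<in> borel_measurable lebesgue" using gm by measurable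
      moreover have "\<bar>gn n x powr p\<bar> \<le> real n powr p" for x
      proof -
        have le: "gn n x \<le> real n" by (simp add: gn_def indicator_def)
        have "gn n x powr p \<le> real n powr p" using gf[of n x] le p by (intro powr_mono2) auto
        then show ?thesis by simp
      qed
      moreover have "gn n x powr p = 0" if "x \<notin> TT (real n)" for x using that by (simp add: gn_def)
      ultimately show ?thesis unfolding BS_def by blast
    qed
    then show ?thesis by (rule BS_integrable)
  qed
  have mono: "gn n x \<le> gn (Suc n) x" for n x
  proof -
    have "TT (real n) \<subseteq> TT (real (Suc n))" by (rule TT_mono) simp
    then show ?thesis by (auto simp: gn_def indicator_def)
  qed
  have sup: "(SUP n. ennreal (gn n x powr p)) = ennreal (\<bar>f x\<bar> powr p)" for x
  proof (rule antisym)
    show "(SUP n. ennreal (gn n x powr p)) \<le> ennreal (\<bar>f x\<bar> powr p)"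
      using gf p by (intro SUP_least ennreal_leI powr_mono2) auto
  next
    obtain n :: nat where n: "max \<bar>f x\<bar> (norm x) \<le> real n" using real_arch_simple by blast
    have nx: "norm x \<le> real n" using n by simp
    have "\<bar>x$i\<bar> \<le> real n" for i using component_le_norm_cart[of x i] nx by linarith
    then have "x \<in> TT (real n)" unfolding TT_def by blast
    then have "gn n x = \<bar>f x\<bar>" using n by (simp add: gn_def)
    then have "ennreal (\<bar>f x\<bar> powr p) = ennreal (gn n x powr p)" by simp
    also have "\<dots> \<le> (SUP n. ennreal (gn n x powr p))" by (rule SUP_upper) simp
    finally show "ennreal (\<bar>f x\<bar> powr p) \<le> (SUP n. ennreal (gn n x powr p))" .
  qed
  have "(\<integral>\<^sup>+x. ennreal (\<bar>f x\<bar> powr p) \<partial>lebesgue) = (\<integral>\<^sup>+x. (SUP n. ennreal (gn n x powr p)) \<partial>lebesgue)"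
    by (simp add: sup)
  also have "\<dots> = (SUP n. \<integral>\<^sup>+x. ennreal (gn n x powr p) \<partial>lebesgue)"
  proof (rule nn_integral_monotone_convergence_SUP_AE)
    show "\<And>n. AE x in lebesgue. ennreal (gn n x powr p) \<le> ennreal (gn (Suc n) x powr p)"
      using mono gf p by (intro AE_I2 ennreal_leI powr_mono2) auto
    show "\<And>n. (\<lambda>x. ennreal (gn n x powr p)) \<in> borel_measurable lebesgue"
      using gpint by (intro measurable_compose[OF _ measurable_ennreal] borel_measurable_integrable)
  qed
  also have "\<dots> \<le> ennreal B"
  proof (rule SUP_least)
    fix n
    have "(\<integral>\<^sup>+x. ennreal (gn n x powr p) \<partial>lebesgue) = ennreal (\<integral>x. gn n x powr p \<partial>lebesgue)"
      by (rule nn_integral_eq_integral[OF gpint]) simp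
    also have "\<dots> \<le> ennreal B" using gint by (rule ennreal_leI)
    finally show "(\<integral>\<^sup>+x. ennreal (gn n x powr p) \<partial>lebesgue) \<le> ennreal B" .
  qed
  finally have nn0: "(\<integral>\<^sup>+x. ennreal (\<bar>f x\<bar> powr p) \<partial>lebesgue) \<le> ennreal B" .
  have nn: "(\<integral>\<^sup>+x. ennreal (\<bar>f x\<bar> powr p) \<partial>lebesgue) < \<infinity>"
    by (rule le_less_trans[OF nn0]) simp
  have "integrable lebesgue (\<lambda>x. \<bar>f x\<bar> powr p)"
  proof (rule integrableI_bounded)
    show "(\<lambda>x. \<bar>f x\<bar> powr p) \<in> borel_measurable lebesgue" using fm by measurable
    show "(\<integral>\<^sup>+x. ennreal (norm (\<bar>f x\<bar> powr p)) \<partial>lebesgue) < \<infinity>" using nn by simp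
  qed
  then show ?thesis using fm by (simp add: Lp_def)
qed

theorem theorem4p1:
  fixes p :: real
  assumes "1 < p"
  shows "(SR_pp p :: (real^'n::finite \<Rightarrow> real) set) = Lp p"
  using SR_sub_Lp[OF assms] Lp_sub_SR[OF assms] by blast

end
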